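(* Let $I^{\imath}=[1,r]\times([-r,r]\setminus\{0\})$. For each $A=(a_{ij})\in\Pi^{\imath}_{n,d}$ we have $\tilde y_A=w_A^+$, and moreover $$\ell'(w_A^+)=d^2-\frac12\sum_{(i,j)\in I^{\imath}}\Big(\sum_{x<i,\,y<j}a_{ij}a_{xy}+\sum_{x>i,\,y>j}a_{ij}a_{xy}\Big)-\frac12\sum_{i>0,\,j>0}a_{ij},$$ where all indices range over $[-r,r]\setminus\{0\}$.
   Context: $d\ge1$, $n=2r\ge2$. $W_{C_d}$ is the group of permutations $w$ of $\{\pm1,\dots,\pm d\}$ with $w(-i)=-w(i)$, simple reflections $s_0=(-1,1)$, $s_i=(-i-1,-i)(i,i+1)$, length $\ell'$. $\Pi^{\imath}_{n,d}$ is the set of matrices $(a_{ij})_{i,j\in[-r,r]\setminus\{0\}}$ of nonnegative integers with $a_{ij}=a_{-i,-j}$, $\sum a_{ij}=2d$; $\lambda=ro(A)$, $\mu=co(A)$ are the row and column sum vectors. For such $\lambda$, $R_i^\lambda=[\lambda_1+\dots+\lambda_{i-1}+1,\lambda_1+\dots+\lambda_i]$ for $i>0$, $R_{-i}^\lambda=-R_i^\lambda$, $W_\lambda=\{w:w(R_i^\lambda)=R_i^\lambda\ \forall i\}$. The double coset of $A$ is the unique $W_\lambda yW_\mu$ with $\sharp(R_i^\lambda\cap y(R_j^\mu))=a_{ij}$ for all $i,j$, and $w_A^+$ is its longest element. $\tilde y_A$: form a pseudo-matrix whose $(i,j)$ cell is a sequence of $a_{ij}$ numbers, filled with $-d,\dots,-1,1,\dots,d$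 in increasing order, going through rows from top ($i=-r$) to bottom ($i=r$), within a row through cells from right to left, within a cell from right to left. Read it column by column from left ($j=-r$) to right, within a column from bottom to top, within a cell from left to right, obtaining $z_1,\dots,z_{2d}$; $\tilde y_A$ sends the $k$-th element of $(-d,\dots,-1,1,\dots,d)$ to $z_k$. *)

theory Defs
  imports Complex_Main
begin

text \<open>Signed permutations are represented as functions int => int that
  permute {-d..d}-{0}, satisfy w(-i) = -w(i), and are the identity elsewhere.\<close>

definition sgnset :: "nat \<Rightarrow> int set" where
  "sgnset d = {- int d .. int d} - {0}"

definition WC :: "nat \<Rightarrow> (int \<Rightarrow> int) set" where
  "WC d = {w. bij_betw w (sgnset d) (sgnset d) \<and> (\<forall>i. w (- i) = - w i)
              \<and> (\<forall>x. x \<notin> sgnset d \<longrightarrow> w x = x)}"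

definition sref :: "nat \<Rightarrow> int \<Rightarrow> int" where
  "sref i x = (if i = 0 then (if x = 1 then -1 else if x = -1 then 1 else x)
     else (if x = int i then int i + 1 else if x = int i + 1 then int i
           else if x = - int i then - int i - 1 else if x = - int i - 1 then - int i
           else x))"

definition lenC :: "nat \<Rightarrow> (int \<Rightarrow> int) \<Rightarrow> nat" where
  "lenC d w = (LEAST k. \<exists>ws. length ws = k \<and> set ws \<subseteq> {0..<d}
                  \<and> w = foldr (\<lambda>i f. sref i \<circ> f) ws id)"

definition Idx :: "nat \<Rightarrow> int set" where
  "Idx r = {- int r .. int r} - {0}"

definition Idxl :: "nat \<Rightarrow> int list" where
  "Idxl r = [- int r .. -1] @ [1 .. int r]"

definition PiC :: "nat \<Rightarrow> nat \<Rightarrow> (int \<Rightarrow> int \<Rightarrow> nat) set" where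
  "PiC r d = {A. (\<forall>i\<in>Idx r. \<forall>j\<in>Idx r. A i j = A (- i) (- j))
              \<and> (\<Sum>i\<in>Idx r. \<Sum>j\<in>Idx r. A i j) = 2 * d}"

definition ro :: "nat \<Rightarrow> (int \<Rightarrow> int \<Rightarrow> nat) \<Rightarrow> int \<Rightarrow> nat" where
  "ro r A i = (\<Sum>j\<in>Idx r. A i j)"

definition co :: "nat \<Rightarrow> (int \<Rightarrow> int \<Rightarrow> nat) \<Rightarrow> int \<Rightarrow> nat" where
  "co r A j = (\<Sum>i\<in>Idx r. A i j)"

definition Rpos :: "(int \<Rightarrow> nat) \<Rightarrow> int \<Rightarrow> int set" where
  "Rpos lam i = {int (\<Sum>k\<in>{1..i-1}. lam k) + 1 .. int (\<Sum>k\<in>{1..i}. lam k)}"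

definition Rset :: "(int \<Rightarrow> nat) \<Rightarrow> int \<Rightarrow> int set" where
  "Rset lam i = (if i > 0 then Rpos lam i else uminus ` Rpos lam (- i))"

definition Wpar :: "nat \<Rightarrow> nat \<Rightarrow> (int \<Rightarrow> nat) \<Rightarrow> (int \<Rightarrow> int) set" where
  "Wpar r d lam = {w \<in> WC d. \<forall>i\<in>Idx r. w ` Rset lam i = Rset lam i}"

definition dcoset :: "nat \<Rightarrow> nat \<Rightarrow> (int \<Rightarrow> nat) \<Rightarrow> (int \<Rightarrow> nat) \<Rightarrow> (int \<Rightarrow> int)
    \<Rightarrow> (int \<Rightarrow> int) set" where
  "dcoset r d lam mu y = {u \<circ> y \<circ> v | u v. u \<in> Wpar r d lam \<and> v \<in> Wpar r d mu}"

definition dcoset_of :: "nat \<Rightarrow> nat \<Rightarrow> (int \<Rightarrow> int \<Rightarrow> nat) \<Rightarrow> (int \<Rightarrow> int) set" where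
  "dcoset_of r d A = (THE D. \<exists>y\<in>WC d. D = dcoset r d (ro r A) (co r A) y
       \<and> (\<forall>i\<in>Idx r. \<forall>j\<in>Idx r.
             card (Rset (ro r A) i \<inter> y ` Rset (co r A) j) = A i j))"

definition wplus :: "nat \<Rightarrow> nat \<Rightarrow> (int \<Rightarrow> int \<Rightarrow> nat) \<Rightarrow> (int \<Rightarrow> int)" where
  "wplus r d A = (THE w. w \<in> dcoset_of r d A \<and> (\<forall>v\<in>dcoset_of r d A. lenC d v \<le> lenC d w))"

definition sgnl :: "nat \<Rightarrow> int list" where
  "sgnl d = [- int d .. -1] @ [1 .. int d]"

definition fill_cells :: "nat \<Rightarrow> (int \<times> int) list" where
  "fill_cells r = [(i, j). i \<leftarrow> Idxl r, j \<leftarrow> rev (Idxl r)]"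

definition read_cells :: "nat \<Rightarrow> (int \<times> int) list" where
  "read_cells r = [(i, j). j \<leftarrow> Idxl r, i \<leftarrow> rev (Idxl r)]"

definition cell_offset :: "nat \<Rightarrow> (int \<Rightarrow> int \<Rightarrow> nat) \<Rightarrow> int \<Rightarrow> int \<Rightarrow> nat" where
  "cell_offset r A i j =
     sum_list (map (\<lambda>(x, y). A x y) (takeWhile (\<lambda>c. c \<noteq> (i, j)) (fill_cells r)))"

text \<open>Content of cell (i,j) read from left to right; it was filled right to left.\<close>
definition cell_content :: "nat \<Rightarrow> nat \<Rightarrow> (int \<Rightarrow> int \<Rightarrow> nat) \<Rightarrow> int \<Rightarrow> int \<Rightarrow> int list" where
  "cell_content r d A i j = rev (take (A i j) (drop (cell_offset r A i j) (sgnl d)))"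

definition zseq :: "nat \<Rightarrow> nat \<Rightarrow> (int \<Rightarrow> int \<Rightarrow> nat) \<Rightarrow> int list" where
  "zseq r d A = concat (map (\<lambda>(i, j). cell_content r d A i j) (read_cells r))"

definition ytilde :: "nat \<Rightarrow> nat \<Rightarrow> (int \<Rightarrow> int \<Rightarrow> nat) \<Rightarrow> int \<Rightarrow> int" where
  "ytilde r d A x = (case map_of (zip (sgnl d) (zseq r d A)) x of None \<Rightarrow> x | Some z \<Rightarrow> z)"

end

theory Submission
  imports Defs
begin

abbreviation ee :: "nat \<Rightarrow> nat \<Rightarrow> int" where "ee d k \<equiv> sgnl d ! k"

lemma len_sgnl: "length (sgnl d) = 2*d"
  by (simp add: sgnl_def)

lemma sgnl_nth: "k < 2*d \<Longrightarrow> ee d k = (if k < d then int k - int d else int k - int d + 1)"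
  by (auto simp: sgnl_def nth_append nth_upto)

lemma set_sgnl: "set (sgnl d) = sgnset d"
  by (auto simp: sgnl_def sgnset_def)

lemma distinct_sgnl: "distinct (sgnl d)"
  by (auto simp: sgnl_def)

lemma finite_S[simp]: "finite (sgnset d)"
  by (simp add: sgnset_def)

lemma card_S: "card (sgnset d) = 2*d"
  using distinct_card[OF distinct_sgnl, of d] by (simp add: set_sgnl len_sgnl)

lemma e_mono: "k < k' \<Longrightarrow> k' < 2*d \<Longrightarrow> ee d k < ee d k'"
  by (simp add: sgnl_nth)

lemma e_mono_iff: "k < 2*d \<Longrightarrow> k' < 2*d \<Longrightarrow> ee d k < ee d k' \<longleftrightarrow> k < k'"
  by (simp add: sgnl_nth) linarith

lemma e_inj_iff: "k < 2*d \<Longrightarrow> k' < 2*d \<Longrightarrow> ee d k = ee d k' \<longleftrightarrow> k = k'"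
  by (simp add: sgnl_nth)

lemma e_le_iff: "k < 2*d \<Longrightarrow> k' < 2*d \<Longrightarrow> ee d k \<le> ee d k' \<longleftrightarrow> k \<le> k'"
  by (simp add: sgnl_nth)

lemma e_neg: "k < 2*d \<Longrightarrow> ee d (2*d - 1 - k) = - ee d k"
  by (simp add: sgnl_nth) linarith

lemma e_in: "k < 2*d \<Longrightarrow> ee d k \<in> sgnset d"
  using nth_mem[of k "sgnl d"] by (simp add: len_sgnl set_sgnl)

lemma e_surj: "x \<in> sgnset d \<Longrightarrow> \<exists>k<2*d. ee d k = x"
  by (metis in_set_conv_nth len_sgnl set_sgnl)

lemma inj_e: "inj_on (ee d) {0..<2*d}"
  by (auto simp: inj_on_def e_inj_iff)

lemma S_neg: "x \<in> sgnset d \<Longrightarrow> - x \<in> sgnset d"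
  by (auto simp: sgnset_def)

lemma S_neg_iff: "- x \<in> sgnset d \<longleftrightarrow> x \<in> sgnset d"
  by (auto simp: sgnset_def)

lemma rank_e: assumes "x \<in> sgnset d" shows "x = ee d (card {y\<in>sgnset d. y < x})"
proof -
  obtain k where k: "k < 2*d" "ee d k = x" using e_surj[OF assms] by blast
  have "{y\<in>sgnset d. y < x} = ee d ` {0..<k}"
  proof
    show "{y \<in> sgnset d. y < x} \<subseteq> ee d ` {0..<k}"
    proof
      fix y assume "y \<in> {y \<in> sgnset d. y < x}"
      then obtain k' where "k' < 2*d" "ee d k' = y" "y < x" using e_surj by blast
      then show "y \<in> ee d ` {0..<k}" using k e_mono_iff by auto
    qed
    show "ee d ` {0..<k} \<subseteq> {y \<in> sgnset d. y < x}"
      using k by (auto intro!: e_in e_mono)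
  qed
  moreover have "card (ee d ` {0..<k}) = k"
    using inj_on_subset[OF inj_e, of "{0..<k}" d] k by (simp add: card_image)
  ultimately show ?thesis using k by simp
qed

section \<open>Group WC\<close>

lemma WC_D:
  assumes "w \<in> WC d"
  shows "bij_betw w (sgnset d) (sgnset d)" "\<And>i. w (- i) = - w i" "\<And>x. x \<notin> sgnset d \<Longrightarrow> w x = x"
  using assms by (auto simp: WC_def)

lemma WC_in: "w \<in> WC d \<Longrightarrow> x \<in> sgnset d \<Longrightarrow> w x \<in> sgnset d"
  by (meson WC_D(1) bij_betwE)

lemma WC_bij: assumes "w \<in> WC d" shows "bij w"
proof -
  have b: "bij_betw w (sgnset d) (sgnset d)" and o: "\<And>x. x \<notin> sgnset d \<Longrightarrow> w x = x"
    using WC_D[OF assms] by auto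
  have "inj w"
  proof (rule injI)
    fix a b assume "w a = w b"
    then show "a = b" using b o
      by (metis WC_in assms bij_betw_iff_bijections)
  qed
  moreover have "surj w"
  proof -
    have "y \<in> range w" for y
    proof (cases "y \<in> sgnset d")
      case True then obtain x where "x \<in> sgnset d" "y = w x" using b
        by (metis bij_betw_imp_surj_on imageE)
      then show ?thesis by auto
    next
      case False then show ?thesis using o by (metis rangeI)
    qed
    then show ?thesis by auto
  qed
  ultimately show ?thesis by (simp add: bij_def)
qed

lemma WC_inj: "w \<in> WC d \<Longrightarrow> w a = w b \<longleftrightarrow> a = b"
  using WC_bij bij_is_inj injD by metis

lemma WC_id: "id \<in> WC d"
  by (auto simp: WC_def)

lemma WC_comp: "u \<in> WC d \<Longrightarrow> v \<in> WC d \<Longrightarrow> u \<circ> v \<in> WC d"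
  unfolding WC_def by (auto intro: bij_betw_trans)

lemma WC_inv_f: "w \<in> WC d \<Longrightarrow> inv w (w x) = x"
  using WC_bij bij_is_inj inv_f_f by metis

lemma WC_f_inv: "w \<in> WC d \<Longrightarrow> w (inv w x) = x"
  using WC_bij bij_is_surj surj_f_inv_f by metis

lemma WC_inv: assumes "w \<in> WC d" shows "inv w \<in> WC d"
proof -
  have o: "inv w (- i) = - inv w i" for i
    by (metis assms WC_D(2) WC_inv_f WC_f_inv)
  have out: "x \<notin> sgnset d \<Longrightarrow> inv w x = x" for x
    by (metis assms WC_D(3) WC_inv_f)
  have "inv w ` sgnset d = sgnset d"
  proof -
    have "w ` sgnset d = sgnset d" using WC_D(1)[OF assms] by (simp add: bij_betw_def)
    then show ?thesis by (metis WC_bij assms bij_is_inj image_inv_f_f)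
  qed
  moreover have "inj_on (inv w) (sgnset d)"
    by (meson WC_bij assms bij_imp_bij_inv bij_is_inj inj_on_subset subset_UNIV)
  ultimately show ?thesis using o out by (auto simp: WC_def bij_betw_def)
qed

lemma WC_odd: "w \<in> WC d \<Longrightarrow> w (- i) = - w i"
  by (simp add: WC_def)

lemma WC_out: "w \<in> WC d \<Longrightarrow> x \<notin> sgnset d \<Longrightarrow> w x = x"
  by (simp add: WC_def)

lemma WC_zero: "w \<in> WC d \<Longrightarrow> w 0 = 0"
  by (simp add: WC_def sgnset_def)



definition Lset :: "nat \<Rightarrow> (int \<Rightarrow> int) \<Rightarrow> (int \<times> int) set" where
  "Lset d w = {(a,b) \<in> sgnset d \<times> sgnset d. a < b \<and> 0 \<le> a + b \<and> w b < w a}"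

definition Lw :: "nat \<Rightarrow> (int \<Rightarrow> int) \<Rightarrow> nat" where
  "Lw d w = card (Lset d w)"

lemma finite_Lset[simp]: "finite (Lset d w)"
  by (rule finite_subset[of _ "sgnset d \<times> sgnset d"]) (auto simp: Lset_def)

lemma Lw_id: "Lw d id = 0"
proof -
  have "Lset d id = {}" by (auto simp: Lset_def)
  then show ?thesis by (simp add: Lw_def)
qed

lemma Lw_id': "Lw d (\<lambda>x. x) = 0"
  using Lw_id by (simp add: id_def)

lemma sref_invol: "sref i (sref i x) = x"
  by (auto simp: sref_def)

lemma sref_comp_self: "sref i \<circ> sref i = id"
  by (auto simp: sref_invol)

lemma sref_odd: "sref i (- x) = - sref i x"
  by (auto simp: sref_def)

lemma sref_S: "i < d \<Longrightarrow> x \<in> sgnset d \<Longrightarrow> sref i x \<in> sgnset d"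
  by (auto simp: sref_def sgnset_def)

lemma sref_out: "i < d \<Longrightarrow> x \<notin> sgnset d \<Longrightarrow> sref i x = x"
  by (auto simp: sref_def sgnset_def)

lemma sref_WC: assumes "i < d" shows "sref i \<in> WC d"
proof -
  have "bij_betw (sref i) (sgnset d) (sgnset d)"
    by (rule bij_betw_byWitness[where f'="sref i"]) (auto simp: sref_invol sref_S assms)
  then show ?thesis using sref_odd sref_out assms by (auto simp: WC_def)
qed

definition exc :: "nat \<Rightarrow> int \<Rightarrow> int \<Rightarrow> bool" where
  "exc i u u' = (if i = 0 then u = -1 \<and> u' = 1
      else (u = int i \<and> u' = int i + 1) \<or> (u = - int i - 1 \<and> u' = - int i))"

lemma sref_order: "u < u' \<Longrightarrow> u \<noteq> 0 \<Longrightarrow> u' \<noteq> 0 \<Longrightarrow> (sref i u' < sref i u \<longleftrightarrow> exc i u u')"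
  unfolding sref_def exc_def by auto

lemma exc_lt: "exc i u u' \<Longrightarrow> u < u'"
  unfolding exc_def by (auto split: if_splits)

lemma card_symdiff_single:
  assumes "finite X" "Y = (X - {e}) \<union> ({e} - X)"
  shows "(e \<in> X \<longrightarrow> card Y + 1 = card X) \<and> (e \<notin> X \<longrightarrow> card Y = card X + 1)"
proof (cases "e \<in> X")
  case True
  then have "Y = X - {e}" using assms by auto
  then show ?thesis using True assms by (simp add: card_Diff_singleton)
     (metis Suc_pred card_gt_0_iff emptyE)
next
  case False
  then have "Y = insert e X" using assms by auto
  then show ?thesis using False assms by simp
qed

lemma Lset_flip:
  assumes w: "w \<in> WC d"
  shows "Lset d (sref i \<circ> w) = (Lset d w - {(a,b)\<in>sgnset d \<times> sgnset d. a < b \<and> 0 \<le> a + b \<and>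
                     (exc i (w a) (w b) \<or> exc i (w b) (w a))})
        \<union> ({(a,b)\<in>sgnset d \<times> sgnset d. a < b \<and> 0 \<le> a + b \<and>
                     (exc i (w a) (w b) \<or> exc i (w b) (w a))} - Lset d w)"
proof -
  have nz: "x \<in> sgnset d \<Longrightarrow> w x \<noteq> 0" for x using WC_in[OF w] by (auto simp: sgnset_def)
  have key: "a \<in> sgnset d \<Longrightarrow> b \<in> sgnset d \<Longrightarrow> a < b \<Longrightarrow>
     (sref i (w b) < sref i (w a)) = ((w b < w a) \<noteq> (exc i (w a) (w b) \<or> exc i (w b) (w a)))" for a b
  proof -
    assume ab: "a \<in> sgnset d" "b \<in> sgnset d" "a < b"
    then have ne: "w a \<noteq> w b" using WC_inj[OF w] by auto
    show ?thesis
    proof (cases "w a < w b")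
      case True
      then show ?thesis using sref_order[of "w a" "w b" i] nz ab exc_lt[of i "w b" "w a"] by auto
    next
      case False
      then have lt: "w b < w a" using ne by auto
      have "sref i (w a) \<noteq> sref i (w b)" by (metis sref_invol ne)
      then show ?thesis using lt sref_order[of "w b" "w a" i] nz ab exc_lt[of i "w a" "w b"]
        by auto
    qed
  qed
  show ?thesis
    unfolding Lset_def using key by auto
qed

lemma flip_single_0:
  assumes w: "w \<in> WC d" and p: "p \<in> sgnset d" "w p = 1"
  shows "{(a,b)\<in>sgnset d \<times> sgnset d. a < b \<and> 0 \<le> a + b \<and>
                     (exc 0 (w a) (w b) \<or> exc 0 (w b) (w a))} = {(- \<bar>p\<bar>, \<bar>p\<bar>)}"
proof -
  have wm: "w (-p) = -1" using WC_odd[OF w] p by simp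
  have iff1: "x \<in> sgnset d \<Longrightarrow> w x = 1 \<longleftrightarrow> x = p" for x using WC_inj[OF w] p by metis
  have iff2: "x \<in> sgnset d \<Longrightarrow> w x = -1 \<longleftrightarrow> x = -p" for x using WC_inj[OF w] wm by metis
  have p0: "p \<noteq> 0" using p by (auto simp: sgnset_def)
  have pS: "- p \<in> sgnset d" "\<bar>p\<bar> \<in> sgnset d" "- \<bar>p\<bar> \<in> sgnset d" using p S_neg
    by (auto simp: abs_if)
  show ?thesis
  proof (intro equalityI subsetI)
    fix x assume "x \<in> {(a,b)\<in>sgnset d \<times> sgnset d. a < b \<and> 0 \<le> a + b \<and>
                     (exc 0 (w a) (w b) \<or> exc 0 (w b) (w a))}"
    then obtain a b where x: "x = (a,b)" "a \<in> sgnset d" "b \<in> sgnset d" "a < b"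
       "(w a = -1 \<and> w b = 1) \<or> (w b = -1 \<and> w a = 1)" by (auto simp: exc_def)
    then have "(a = -p \<and> b = p) \<or> (b = -p \<and> a = p)" using iff1 iff2 by auto
    then show "x \<in> {(- \<bar>p\<bar>, \<bar>p\<bar>)}" using x p0 by (auto simp: abs_if)
  next
    fix x assume "x \<in> {(- \<bar>p\<bar>, \<bar>p\<bar>)}"
    then show "x \<in> {(a,b)\<in>sgnset d \<times> sgnset d. a < b \<and> 0 \<le> a + b \<and>
                     (exc 0 (w a) (w b) \<or> exc 0 (w b) (w a))}"
      using pS p wm p0 by (auto simp: exc_def abs_if)
  qed
qed

lemma flip_single_i:
  assumes w: "w \<in> WC d" and i: "0 < i" and p: "p \<in> sgnset d" "w p = int i"
    and q: "q \<in> sgnset d" "w q = int i + 1"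
  shows "{(a,b)\<in>sgnset d \<times> sgnset d. a < b \<and> 0 \<le> a + b \<and>
                     (exc i (w a) (w b) \<or> exc i (w b) (w a))} =
         {if 0 < p + q then (min p q, max p q) else (- max p q, - min p q)}"
proof -
  have wmp: "w (-p) = - int i" using WC_odd[OF w] p by simp
  have wmq: "w (-q) = - int i - 1" using WC_odd[OF w] q by simp
  have i1: "x \<in> sgnset d \<Longrightarrow> w x = int i \<longleftrightarrow> x = p" for x using WC_inj[OF w] p by metis
  have i2: "x \<in> sgnset d \<Longrightarrow> w x = int i + 1 \<longleftrightarrow> x = q" for x using WC_inj[OF w] q by metis
  have i3: "x \<in> sgnset d \<Longrightarrow> w x = - int i \<longleftrightarrow> x = -p" for x using WC_inj[OF w] wmp by metis
  have i4: "x \<in> sgnset d \<Longrightarrow> w x = - int i - 1 \<longleftrightarrow> x = -q" for x using WC_inj[OF w] wmq by metis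
  have pq1: "p \<noteq> q" using p q by auto
  have pq2: "p + q \<noteq> 0"
  proof
    assume "p + q = 0" then have "q = - p" by simp
    then have "w q = - int i" using wmp by simp
    then show False using q by simp
  qed
  note pq = pq1 pq2
  have S4: "-p \<in> sgnset d" "-q \<in> sgnset d" using p q S_neg by auto
  show ?thesis
  proof (intro equalityI subsetI)
    fix x assume "x \<in> {(a,b)\<in>sgnset d \<times> sgnset d. a < b \<and> 0 \<le> a + b \<and>
                     (exc i (w a) (w b) \<or> exc i (w b) (w a))}"
    then obtain a b where x: "x = (a,b)" "a \<in> sgnset d" "b \<in> sgnset d" "a < b" "0 \<le> a + b"
       "(w a = int i \<and> w b = int i + 1) \<or> (w a = - int i - 1 \<and> w b = - int i) \<or>
        (w b = int i \<and> w a = int i + 1) \<or> (w b = - int i - 1 \<and> w a = - int i)"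
      using i by (auto simp: exc_def)
    then have "(a = p \<and> b = q) \<or> (a = -q \<and> b = -p) \<or> (b = p \<and> a = q) \<or> (b = -q \<and> a = -p)"
      using i1 i2 i3 i4 by auto
    then show "x \<in> {if 0 < p + q then (min p q, max p q) else (- max p q, - min p q)}"
      using x pq by auto
  next
    fix x assume "x \<in> {if 0 < p + q then (min p q, max p q) else (- max p q, - min p q)}"
    then show "x \<in> {(a,b)\<in>sgnset d \<times> sgnset d. a < b \<and> 0 \<le> a + b \<and>
                     (exc i (w a) (w b) \<or> exc i (w b) (w a))}"
      using pq p q S4 wmp wmq i by (auto simp: exc_def min_def max_def)
  qed
qed

lemma Lw_flip_gen:
  assumes w: "w \<in> WC d"
    and F: "{(a,b)\<in>sgnset d \<times> sgnset d. a < b \<and> 0 \<le> a + b \<and>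
                     (exc i (w a) (w b) \<or> exc i (w b) (w a))} = {e0}"
  shows "(e0 \<in> Lset d w \<longrightarrow> Lw d (sref i \<circ> w) + 1 = Lw d w) \<and>
         (e0 \<notin> Lset d w \<longrightarrow> Lw d (sref i \<circ> w) = Lw d w + 1)"
proof -
  have Y: "Lset d (sref i \<circ> w) = (Lset d w - {e0}) \<union> ({e0} - Lset d w)"
    using Lset_flip[OF w, of i] unfolding F .
  show ?thesis using card_symdiff_single[OF finite_Lset Y] unfolding Lw_def .
qed

lemma WC_img: "w \<in> WC d \<Longrightarrow> w ` sgnset d = sgnset d"
  by (simp add: WC_def bij_betw_def)

lemma WC_surj: "w \<in> WC d \<Longrightarrow> y \<in> sgnset d \<Longrightarrow> \<exists>x\<in>sgnset d. w x = y"
  using WC_img by (metis imageE)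

lemma flip_exists:
  assumes w: "w \<in> WC d" and i: "i < d"
  shows "\<exists>e0. {(a,b)\<in>sgnset d \<times> sgnset d. a < b \<and> 0 \<le> a + b \<and>
                     (exc i (w a) (w b) \<or> exc i (w b) (w a))} = {e0}"
proof (cases "i = 0")
  case True
  have "1 \<in> sgnset d" using i by (auto simp: sgnset_def)
  then obtain p where "p \<in> sgnset d" "w p = 1" using WC_surj[OF w] by blast
  then show ?thesis using flip_single_0[OF w] True by blast
next
  case False
  have "int i \<in> sgnset d" "int i + 1 \<in> sgnset d" using i False by (auto simp: sgnset_def)
  then obtain p q where "p \<in> sgnset d" "w p = int i" "q \<in> sgnset d" "w q = int i + 1"
    using WC_surj[OF w] by meson
  then show ?thesis using flip_single_i[OF w] False by blast
qed

lemma Lw_step: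
  assumes w: "w \<in> WC d" and i: "i < d"
  shows "Lw d (sref i \<circ> w) + 1 = Lw d w \<or> Lw d (sref i \<circ> w) = Lw d w + 1"
proof -
  obtain e0 where "{(a,b)\<in>sgnset d \<times> sgnset d. a < b \<and> 0 \<le> a + b \<and>
                     (exc i (w a) (w b) \<or> exc i (w b) (w a))} = {e0}"
    using flip_exists[OF w i] by blast
  from Lw_flip_gen[OF w this] show ?thesis by blast
qed

lemma Lw_desc0:
  assumes w: "w \<in> WC d" and p: "p \<in> sgnset d" "w p = 1"
  shows "Lw d (sref 0 \<circ> w) < Lw d w \<longleftrightarrow> p < 0"
proof -
  have wm: "w (-p) = -1" using WC_odd[OF w] p by simp
  have pS: "- p \<in> sgnset d" using p S_neg by auto
  have p0: "p \<noteq> 0" using p by (auto simp: sgnset_def)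
  have "(- \<bar>p\<bar>, \<bar>p\<bar>) \<in> Lset d w \<longleftrightarrow> p < 0"
  proof (cases "p < 0")
    case True then show ?thesis using p pS wm by (simp add: Lset_def abs_if)
  next
    case False then have "0 < p" using p0 by simp
    then show ?thesis using p pS wm by (simp add: Lset_def abs_if)
  qed
  then show ?thesis using Lw_flip_gen[OF w flip_single_0[OF w p]] by auto
qed

lemma Lw_desci:
  assumes w: "w \<in> WC d" and i: "0 < i" and p: "p \<in> sgnset d" "w p = int i"
    and q: "q \<in> sgnset d" "w q = int i + 1"
  shows "Lw d (sref i \<circ> w) < Lw d w \<longleftrightarrow> q < p"
proof -
  have wmp: "w (-p) = - int i" using WC_odd[OF w] p by simp
  have wmq: "w (-q) = - int i - 1" using WC_odd[OF w] q by simp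
  have pq1: "p \<noteq> q" using p q by auto
  have S4: "-p \<in> sgnset d" "-q \<in> sgnset d" using p q S_neg by auto
  have "(if 0 < p + q then (min p q, max p q) else (- max p q, - min p q)) \<in> Lset d w
        \<longleftrightarrow> q < p"
  proof (cases "0 < p + q")
    case True
    show ?thesis
    proof (cases "q < p")
      case True
      then show ?thesis using \<open>0 < p + q\<close> p q by (simp add: Lset_def min_def max_def)
    next
      case False
      then have "p < q" using pq1 by simp
      then show ?thesis using \<open>0 < p + q\<close> p q by (simp add: Lset_def min_def max_def)
    qed
  next
    case False
    show ?thesis
    proof (cases "q < p")
      case True
      then show ?thesis using False S4 wmp wmq by (simp add: Lset_def min_def max_def)
    next
      case F2: False
      then have "p < q" using pq1 by simp
      then show ?thesis using False S4 wmp wmq by (simp add: Lset_def min_def max_def)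
    qed
  qed
  then show ?thesis using Lw_flip_gen[OF w flip_single_i[OF w i p q]] by auto
qed



lemma no_desc_id:
  assumes w: "w \<in> WC d" and nd: "\<And>i. i < d \<Longrightarrow> \<not> Lw d (sref i \<circ> w) < Lw d w"
  shows "w = id"
proof -
  define g where "g = inv w"
  have gW: "g \<in> WC d" using WC_inv[OF w] g_def by simp
  have wg: "w (g x) = x" for x using WC_f_inv[OF w] g_def by simp
  have kS: "1 \<le> k \<Longrightarrow> k \<le> d \<Longrightarrow> int k \<in> sgnset d" for k by (auto simp: sgnset_def)
  have gS: "1 \<le> k \<Longrightarrow> k \<le> d \<Longrightarrow> g (int k) \<in> sgnset d" for k using WC_in[OF gW kS] .
  have inc: "1 \<le> k \<Longrightarrow> k < d \<Longrightarrow> g (int k) < g (int k + 1)" for k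
  proof -
    assume k: "1 \<le> k" "k < d"
    have p: "g (int k) \<in> sgnset d" "w (g (int k)) = int k" using gS k wg by auto
    have q: "g (int (k+1)) \<in> sgnset d" "w (g (int (k+1))) = int k + 1" using gS[of "k+1"] k wg by auto
    have "\<not> g (int (k+1)) < g (int k)" using Lw_desci[OF w _ p q] nd[OF k(2)] k by auto
    moreover have "g (int (k+1)) \<noteq> g (int k)" using p(2) q(2) by (metis add_cancel_right_right one_neq_zero)
    ultimately show ?thesis by (metis add.commute linorder_neqE_linordered_idom of_nat_Suc Suc_eq_plus1)
  qed
  have g1: "d \<ge> 1 \<Longrightarrow> 0 < g 1"
  proof -
    assume d: "d \<ge> 1"
    have p: "g 1 \<in> sgnset d" "w (g 1) = 1" using gS[of 1] d wg by auto
    have "\<not> g 1 < 0" using Lw_desc0[OF w p] nd d by auto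
    moreover have "g 1 \<noteq> 0" using p by (auto simp: sgnset_def)
    ultimately show ?thesis by simp
  qed
  have up: "1 \<le> k \<longrightarrow> k \<le> d \<longrightarrow> int k \<le> g (int k)" for k
  proof (induction k)
    case 0 then show ?case by simp
  next
    case (Suc k)
    show ?case
    proof (intro impI)
      assume a: "1 \<le> Suc k" "Suc k \<le> d"
      show "int (Suc k) \<le> g (int (Suc k))"
      proof (cases "k = 0")
        case True then show ?thesis using g1 a by auto
      next
        case False
        have h1: "int k \<le> g (int k)" using Suc.IH False a by auto
        have h2: "g (int k) < g (int k + 1)" using inc[of k] False a by auto
        show ?thesis using h1 h2 by (simp add: add.commute)
      qed
    qed
  qed
  have down: "m < d \<longrightarrow> g (int (d - m)) \<le> int (d - m)" for m
  proof (induction m)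
    case 0
    show ?case using gS[of d] by (auto simp: sgnset_def)
  next
    case (Suc m)
    show ?case
    proof
      assume m: "Suc m < d"
      have "g (int (d - Suc m)) < g (int (d - Suc m) + 1)" using inc[of "d - Suc m"] m by auto
      moreover have "int (d - Suc m) + 1 = int (d - m)" using m by auto
      ultimately show "g (int (d - Suc m)) \<le> int (d - Suc m)" using Suc m by auto
    qed
  qed
  have gid: "1 \<le> k \<Longrightarrow> k \<le> d \<Longrightarrow> g (int k) = int k" for k
    using up[of k] down[of "d - k"] by auto
  have "w x = x" for x
  proof (cases "x \<in> sgnset d")
    case False then show ?thesis using WC_out[OF w] by simp
  next
    case True
    show ?thesis
    proof (cases "0 < x")
      case True
      have k: "x = int (nat x)" "1 \<le> nat x" "nat x \<le> d" using True \<open>x \<in> sgnset d\<close>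
        by (auto simp: sgnset_def)
      then show ?thesis using wg[of x] gid[of "nat x"] by simp
    next
      case False
      then have "x < 0" using True by (auto simp: sgnset_def)
      have k: "x = - int (nat (-x))" "1 \<le> nat (-x)" "nat (-x) \<le> d" using True \<open>x < 0\<close>
        by (auto simp: sgnset_def)
      then show ?thesis using wg[of "int (nat (-x))"] gid[of "nat (-x)"] WC_odd[OF w, of "int (nat (-x))"] by simp
    qed
  qed
  then show ?thesis by auto
qed

definition wordf :: "nat list \<Rightarrow> int \<Rightarrow> int" where
  "wordf ws = foldr (\<lambda>i f. sref i \<circ> f) ws id"

lemma wordf_props: "set ws \<subseteq> {0..<d} \<Longrightarrow> wordf ws \<in> WC d \<and> Lw d (wordf ws) \<le> length ws"
proof (induction ws)
  case Nil then show ?case using WC_id Lw_id by (simp add: wordf_def id_def)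
next
  case (Cons i ws)
  then have W: "wordf ws \<in> WC d" "Lw d (wordf ws) \<le> length ws" "i < d" by auto
  have eq: "wordf (i # ws) = sref i \<circ> wordf ws" by (simp add: wordf_def)
  have a: "sref i \<circ> wordf ws \<in> WC d" by (rule WC_comp[OF sref_WC[OF W(3)] W(1)])
  have b: "Lw d (sref i \<circ> wordf ws) \<le> length (i # ws)" using Lw_step[OF W(1) W(3)] W(2) by auto
  show ?case unfolding eq using a b by blast
qed

lemma word_exists: "w \<in> WC d \<Longrightarrow> Lw d w = n \<Longrightarrow> \<exists>ws. length ws = n \<and> set ws \<subseteq> {0..<d} \<and> w = wordf ws"
proof (induction n arbitrary: w)
  case 0
  have "w = id"
  proof (rule no_desc_id[OF 0(1)])
    fix i assume "i < d" then show "\<not> Lw d (sref i \<circ> w) < Lw d w" using 0 by simp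
  qed
  then show ?case by (auto simp: wordf_def)
next
  case (Suc n)
  have "w \<noteq> id"
  proof
    assume "w = id" then have "Lw d w = 0" using Lw_id by simp
    then show False using Suc(3) by simp
  qed
  then obtain i where i: "i < d" "Lw d (sref i \<circ> w) < Lw d w" using no_desc_id[OF Suc(2)] by blast
  then have L: "Lw d (sref i \<circ> w) = n" using Lw_step[OF Suc(2) i(1)] Suc(3) by auto
  obtain ws where ws: "length ws = n" "set ws \<subseteq> {0..<d}" "sref i \<circ> w = wordf ws"
    using Suc(1)[OF WC_comp[OF sref_WC[OF i(1)] Suc(2)] L] by blast
  have "w = sref i \<circ> (sref i \<circ> w)" by (simp add: fun_eq_iff sref_invol)
  then have "w = wordf (i # ws)" using ws by (simp add: wordf_def)
  then show ?case using ws i by (intro exI[of _ "i # ws"]) auto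
qed

lemma lenC_Lw: assumes w: "w \<in> WC d" shows "lenC d w = Lw d w"
  unfolding lenC_def
proof (rule Least_equality)
  show "\<exists>ws. length ws = Lw d w \<and> set ws \<subseteq> {0..<d} \<and> w = foldr (\<lambda>i f. sref i \<circ> f) ws id"
    using word_exists[OF w refl] by (simp add: wordf_def)
next
  fix k assume "\<exists>ws. length ws = k \<and> set ws \<subseteq> {0..<d} \<and> w = foldr (\<lambda>i f. sref i \<circ> f) ws id"
  then obtain ws where "length ws = k" "set ws \<subseteq> {0..<d}" "w = wordf ws" by (auto simp: wordf_def)
  then show "Lw d w \<le> k" using wordf_props by blast
qed



definition NIset :: "nat \<Rightarrow> (int \<Rightarrow> int) \<Rightarrow> (int \<times> int) set" where
  "NIset d w = {(a,b) \<in> sgnset d \<times> sgnset d. a < b \<and> w a < w b}"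

definition NEGset :: "nat \<Rightarrow> (int \<Rightarrow> int) \<Rightarrow> int set" where
  "NEGset d w = {a \<in> sgnset d. 0 < a \<and> w a < 0}"

lemma card_pairs_lt: "card {(a,b) \<in> sgnset d \<times> sgnset d. a < b} = d * (2*d - 1)"
proof -
  let ?S = "sgnset d"
  let ?X = "{(a,b) \<in> ?S \<times> ?S. a < b}"
  let ?Y = "{(a,b) \<in> ?S \<times> ?S. b < a}"
  let ?D = "{(a,b) \<in> ?S \<times> ?S. a = b}"
  have fin: "finite ?X" "finite ?Y" "finite ?D"
    by (rule finite_subset[of _ "?S \<times> ?S"], auto)+
  have un: "?S \<times> ?S = ?X \<union> ?Y \<union> ?D"
  proof (intro equalityI subsetI)
    fix x assume "x \<in> ?S \<times> ?S"
    then obtain a b where "x = (a,b)" "a \<in> ?S" "b \<in> ?S" by auto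
    then show "x \<in> ?X \<union> ?Y \<union> ?D" by (cases "a < b"; cases "b < a") auto
  qed auto
  have d1: "?X \<inter> ?Y = {}" "(?X \<union> ?Y) \<inter> ?D = {}" by auto
  have "card (?S \<times> ?S) = card ?X + card ?Y + card ?D"
  proof -
    have "card (?S \<times> ?S) = card (?X \<union> ?Y \<union> ?D)" using un by (rule arg_cong)
    also have "\<dots> = card (?X \<union> ?Y) + card ?D" using card_Un_disjoint[OF _ fin(3) d1(2)] fin by blast
    also have "\<dots> = card ?X + card ?Y + card ?D" using card_Un_disjoint[OF fin(1) fin(2) d1(1)] by simp
    finally show ?thesis .
  qed
  moreover have "card ?Y = card ?X"
  proof -
    have "?Y = (\<lambda>(a,b). (b,a)) ` ?X"
    proof (intro equalityI subsetI)
      fix x assume "x \<in> ?Y"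
      then obtain a b where "x = (a,b)" "(b,a) \<in> ?X" by auto
      then show "x \<in> (\<lambda>(a,b). (b,a)) ` ?X" by force
    qed auto
    moreover have "inj_on (\<lambda>(a,b). (b,a)) ?X" by (auto simp: inj_on_def)
    ultimately show ?thesis by (simp add: card_image)
  qed
  moreover have "card ?D = 2*d"
  proof -
    have "?D = (\<lambda>a. (a,a)) ` ?S"
    proof (intro equalityI subsetI)
      fix x assume "x \<in> ?D"
      then obtain a where "x = (a,a)" "a \<in> ?S" by auto
      then show "x \<in> (\<lambda>a. (a,a)) ` ?S" by force
    qed auto
    moreover have "inj_on (\<lambda>a. (a,a)) ?S" by (auto simp: inj_on_def)
    ultimately show ?thesis by (simp add: card_image card_S)
  qed
  moreover have "card (?S \<times> ?S) = 2*d*(2*d)" by (simp add: card_cartesian_product card_S)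
  ultimately have "2 * card ?X + 2*d = 2*d*(2*d)" by simp
  moreover have "d * (2*d - 1) = 2*d*d - d" by (simp add: diff_mult_distrib2)
  ultimately show ?thesis by (simp add: mult.assoc)
qed

lemma length_identity:
  assumes w: "w \<in> WC d"
  shows "2 * Lw d w + card (NIset d w) = d * (2*d - 1) + card (NEGset d w)"
proof -
  let ?S = "sgnset d"
  define NA where "NA = {(a,b) \<in> ?S \<times> ?S. a < b \<and> w b < w a}"
  define Pp where "Pp = {(a,b) \<in> ?S \<times> ?S. a < b \<and> 0 < a + b \<and> w b < w a}"
  define Pm where "Pm = {(a,b) \<in> ?S \<times> ?S. a < b \<and> a + b < 0 \<and> w b < w a}"
  define P0 where "P0 = {(a,b) \<in> ?S \<times> ?S. a < b \<and> a + b = 0 \<and> w b < w a}"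
  have fin: "finite NA" "finite Pp" "finite Pm" "finite P0" "finite (NIset d w)"
    unfolding NA_def Pp_def Pm_def P0_def NIset_def
    by (rule finite_subset[of _ "?S \<times> ?S"], auto)+
  have inj: "a \<in> ?S \<Longrightarrow> b \<in> ?S \<Longrightarrow> a < b \<Longrightarrow> w a \<noteq> w b" for a b using WC_inj[OF w] by auto
  have u1: "{(a,b) \<in> ?S \<times> ?S. a < b} = NA \<union> NIset d w"
  proof (intro equalityI subsetI)
    fix x assume "x \<in> {(a,b) \<in> ?S \<times> ?S. a < b}"
    then obtain a b where x: "x = (a,b)" "a \<in> ?S" "b \<in> ?S" "a < b" by auto
    then have "w a < w b \<or> w b < w a" using inj[of a b] by linarith
    then show "x \<in> NA \<union> NIset d w" using x by (auto simp: NA_def NIset_def)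
  qed (auto simp: NA_def NIset_def)
  have d1: "NA \<inter> NIset d w = {}" by (auto simp: NA_def NIset_def)
  have c1: "card NA + card (NIset d w) = d * (2*d - 1)"
    using card_pairs_lt[of d] card_Un_disjoint[OF fin(1) fin(5) d1] u1 by simp
  have u2: "NA = (Pp \<union> Pm) \<union> P0" by (auto simp: NA_def Pp_def Pm_def P0_def)
  have d2: "Pp \<inter> Pm = {}" "(Pp \<union> Pm) \<inter> P0 = {}" by (auto simp: Pp_def Pm_def P0_def)
  have c2: "card NA = card Pp + card Pm + card P0"
    using u2 card_Un_disjoint[OF fin(2) fin(3) d2(1)] card_Un_disjoint[OF _ fin(4) d2(2)] fin by simp
  have u3: "Lset d w = Pp \<union> P0" by (auto simp: Lset_def Pp_def P0_def)
  have d3: "Pp \<inter> P0 = {}" by (auto simp: Pp_def P0_def)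
  have c3: "Lw d w = card Pp + card P0"
    using u3 card_Un_disjoint[OF fin(2) fin(4) d3] by (simp add: Lw_def)
  have c4: "card Pm = card Pp"
  proof -
    have "Pm = (\<lambda>(a,b). (-b,-a)) ` Pp"
    proof (intro equalityI subsetI)
      fix x assume "x \<in> Pm"
      then obtain a b where x: "x = (a,b)" "a \<in> ?S" "b \<in> ?S" "a < b" "a + b < 0" "w b < w a"
        by (auto simp: Pm_def)
      have "(-b, -a) \<in> Pp" using x S_neg WC_odd[OF w] by (auto simp: Pp_def)
      then show "x \<in> (\<lambda>(a,b). (-b,-a)) ` Pp" using x by force
    next
      fix x assume "x \<in> (\<lambda>(a,b). (-b,-a)) ` Pp"
      then obtain a b where x: "x = (-b,-a)" "a \<in> ?S" "b \<in> ?S" "a < b" "0 < a + b" "w b < w a"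
        by (auto simp: Pp_def)
      then show "x \<in> Pm" using S_neg WC_odd[OF w] by (auto simp: Pm_def)
    qed
    moreover have "inj_on (\<lambda>(a,b). (-b,-a)) Pp" by (auto simp: inj_on_def)
    ultimately show ?thesis by (simp add: card_image)
  qed
  have c5: "card P0 = card (NEGset d w)"
  proof -
    have "P0 = (\<lambda>b. (-b, b)) ` NEGset d w"
    proof (intro equalityI subsetI)
      fix x assume "x \<in> P0"
      then obtain a b where x: "x = (a,b)" "a \<in> ?S" "b \<in> ?S" "a < b" "a + b = 0" "w b < w a"
        by (auto simp: P0_def)
      then have "a = -b" by simp
      then have "w a = - w b" using WC_odd[OF w, of b] by simp
      then have "b \<in> NEGset d w" using x \<open>a = -b\<close> by (auto simp: NEGset_def)
      then show "x \<in> (\<lambda>b. (-b, b)) ` NEGset d w" using x \<open>a = -b\<close> by auto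
    next
      fix x assume "x \<in> (\<lambda>b. (-b, b)) ` NEGset d w"
      then obtain b where x: "x = (-b,b)" "b \<in> ?S" "0 < b" "w b < 0" by (auto simp: NEGset_def)
      then show "x \<in> P0" using S_neg WC_odd[OF w, of b] by (auto simp: P0_def)
    qed
    moreover have "inj_on (\<lambda>b. (-b, b)) (NEGset d w)" by (auto simp: inj_on_def)
    ultimately show ?thesis by (simp add: card_image)
  qed
  show ?thesis using c1 c2 c3 c4 c5 by simp
qed



definition offs :: "'c set \<Rightarrow> ('c \<Rightarrow> 'c \<Rightarrow> bool) \<Rightarrow> ('c \<Rightarrow> nat) \<Rightarrow> 'c \<Rightarrow> nat" where
  "offs X R w c = (\<Sum>c'\<in>{c'\<in>X. R c' c}. w c')"

locale sto =
  fixes X :: "'c set" and R :: "'c \<Rightarrow> 'c \<Rightarrow> bool"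
  assumes fin: "finite X"
    and irr: "\<And>c. \<not> R c c"
    and trans: "\<And>a b c. a \<in> X \<Longrightarrow> b \<in> X \<Longrightarrow> c \<in> X \<Longrightarrow> R a b \<Longrightarrow> R b c \<Longrightarrow> R a c"
    and total: "\<And>a b. a \<in> X \<Longrightarrow> b \<in> X \<Longrightarrow> a \<noteq> b \<Longrightarrow> R a b \<or> R b a"
begin

lemma asym: "a \<in> X \<Longrightarrow> b \<in> X \<Longrightarrow> R a b \<Longrightarrow> \<not> R b a"
  using trans[of a b a] irr[of a] by blast

lemma GC1: assumes "c \<in> X" "c' \<in> X" "R c c'"
  shows "offs X R w c + w c \<le> offs X R w c'"
proof -
  have sub: "insert c {x\<in>X. R x c} \<subseteq> {x\<in>X. R x c'}"
  proof
    fix x assume "x \<in> insert c {x\<in>X. R x c}"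
    then have "x = c \<or> (x \<in> X \<and> R x c)" by simp
    then show "x \<in> {x\<in>X. R x c'}" using assms trans[of x c c'] by blast
  qed
  have "c \<notin> {x\<in>X. R x c}" using irr by auto
  then have "offs X R w c + w c = (\<Sum>x\<in>insert c {x\<in>X. R x c}. w x)"
    unfolding offs_def using fin by (simp add: sum.insert)
  also have "\<dots> \<le> (\<Sum>x\<in>{x\<in>X. R x c'}. w x)"
    by (rule sum_mono2) (use fin sub in auto)
  finally show ?thesis by (simp add: offs_def)
qed

lemma GC2: assumes "c \<in> X" shows "offs X R w c + w c \<le> sum w X"
proof -
  have sub: "insert c {x\<in>X. R x c} \<subseteq> X" using assms by auto
  have "c \<notin> {x\<in>X. R x c}" using irr by auto
  then have "offs X R w c + w c = (\<Sum>x\<in>insert c {x\<in>X. R x c}. w x)"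
    unfolding offs_def using fin by (simp add: sum.insert)
  also have "\<dots> \<le> sum w X"
    by (rule sum_mono2) (use fin sub in auto)
  finally show ?thesis .
qed

lemma GC_disj: assumes "c \<in> X" "c' \<in> X" "c \<noteq> c'"
  shows "{offs X R w c..<offs X R w c + w c} \<inter> {offs X R w c'..<offs X R w c' + w c'} = {}"
  using total[OF assms] GC1[of c c' w] GC1[of c' c w] assms by auto

lemma GC_unique: assumes "c \<in> X" "c' \<in> X" "offs X R w c \<le> k" "k < offs X R w c + w c"
   "offs X R w c' \<le> k" "k < offs X R w c' + w c'" shows "c = c'"
  using GC_disj[of c c' w] assms by auto

lemma GC3: assumes "k < sum w X" shows "\<exists>c\<in>X. offs X R w c \<le> k \<and> k < offs X R w c + w c"
proof -
  let ?I = "\<lambda>c. {offs X R w c..<offs X R w c + w c}"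
  have sub: "(\<Union>c\<in>X. ?I c) \<subseteq> {0..<sum w X}"
  proof
    fix x assume "x \<in> (\<Union>c\<in>X. ?I c)"
    then obtain c where "c \<in> X" "x < offs X R w c + w c" by auto
    then show "x \<in> {0..<sum w X}" using GC2[of c w] by auto
  qed
  have "card (\<Union>c\<in>X. ?I c) = (\<Sum>c\<in>X. card (?I c))"
    by (rule card_UN_disjoint) (use fin GC_disj in auto)
  also have "\<dots> = sum w X" by simp
  finally have "(\<Union>c\<in>X. ?I c) = {0..<sum w X}"
    using sub by (intro card_subset_eq) auto
  then have "k \<in> (\<Union>c\<in>X. ?I c)" using assms by simp
  then show ?thesis by auto
qed

lemma GC4:
  assumes neg: "\<And>c. c \<in> X \<Longrightarrow> ng c \<in> X" "\<And>c. c \<in> X \<Longrightarrow> ng (ng c) = c"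
    and Rn: "\<And>c c'. c \<in> X \<Longrightarrow> c' \<in> X \<Longrightarrow> R c' (ng c) \<longleftrightarrow> R c (ng c')"
    and wn: "\<And>c. c \<in> X \<Longrightarrow> w (ng c) = w c"
    and c: "c \<in> X"
  shows "offs X R w (ng c) + offs X R w c + w c = sum w X"
proof -
  have eq: "{c'\<in>X. R c' (ng c)} = ng ` {c'\<in>X. R c c'}"
  proof (intro equalityI subsetI)
    fix x assume x: "x \<in> {c'\<in>X. R c' (ng c)}"
    then have xX: "x \<in> X" and xR: "R x (ng c)" by auto
    have "R c (ng x)" using Rn[OF c xX] xR by simp
    then have "ng x \<in> {c'\<in>X. R c c'}" using neg(1)[OF xX] by simp
    moreover have "x = ng (ng x)" using neg(2)[OF xX] by simp
    ultimately show "x \<in> ng ` {c'\<in>X. R c c'}" by (rule rev_image_eqI)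
  next
    fix x assume "x \<in> ng ` {c'\<in>X. R c c'}"
    then obtain y where y: "x = ng y" "y \<in> X" "R c y" by auto
    have "R y (ng c) \<longleftrightarrow> R c (ng y)" using Rn[OF c y(2)] .
    have "R (ng y) (ng c) \<longleftrightarrow> R c (ng (ng y))" using Rn[OF c neg(1)[OF y(2)]] .
    then have "R (ng y) (ng c)" using neg(2)[OF y(2)] y(3) by simp
    then show "x \<in> {c'\<in>X. R c' (ng c)}" using neg(1)[OF y(2)] y(1) by simp
  qed
  have inj: "inj_on ng {c'\<in>X. R c c'}"
  proof (rule inj_onI)
    fix a b assume "a \<in> {c'\<in>X. R c c'}" "b \<in> {c'\<in>X. R c c'}" "ng a = ng b"
    then show "a = b" using neg(2) by (metis mem_Collect_eq)
  qed
  have "offs X R w (ng c) = sum w (ng ` {c'\<in>X. R c c'})" unfolding offs_def eq ..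
  also have "\<dots> = sum (w \<circ> ng) {c'\<in>X. R c c'}" using sum.reindex[OF inj] .
  also have "\<dots> = sum w {c'\<in>X. R c c'}" by (rule sum.cong) (auto simp: wn)
  finally have o1: "offs X R w (ng c) = sum w {c'\<in>X. R c c'}" .
  have part: "X = {c'\<in>X. R c' c} \<union> {c} \<union> {c'\<in>X. R c c'}"
  proof (intro equalityI subsetI)
    fix x assume "x \<in> X" then show "x \<in> {c'\<in>X. R c' c} \<union> {c} \<union> {c'\<in>X. R c c'}"
      using total[of x c] c by blast
  qed (use c in blast)
  have "sum w X = sum w {c'\<in>X. R c' c} + w c + sum w {c'\<in>X. R c c'}"
  proof -
    have d1: "{c'\<in>X. R c' c} \<inter> {c} = {}" using irr by auto
    have d2: "({c'\<in>X. R c' c} \<union> {c}) \<inter> {c'\<in>X. R c c'} = {}" using irr asym c by auto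
    have "sum w X = sum w ({c'\<in>X. R c' c} \<union> {c} \<union> {c'\<in>X. R c c'})" using part by (rule arg_cong)
    also have "\<dots> = sum w ({c'\<in>X. R c' c} \<union> {c}) + sum w {c'\<in>X. R c c'}"
      by (rule sum.union_disjoint) (use fin d2 in auto)
    also have "\<dots> = sum w {c'\<in>X. R c' c} + w c + sum w {c'\<in>X. R c c'}"
      using sum.union_disjoint[of "{c'\<in>X. R c' c}" "{c}" w] fin d1 by simp
    finally show ?thesis .
  qed
  then show ?thesis using o1 unfolding offs_def by linarith
qed

end



lemma Idx_neg: "i \<in> Idx r \<Longrightarrow> - i \<in> Idx r" by (auto simp: Idx_def)
lemma Idx_neg_iff: "- i \<in> Idx r \<longleftrightarrow> i \<in> Idx r" by (auto simp: Idx_def)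
lemma Idx_nz: "i \<in> Idx r \<Longrightarrow> i \<noteq> 0" by (auto simp: Idx_def)
lemma finite_Idx[simp]: "finite (Idx r)" by (simp add: Idx_def)

lemma sto_Idx: "sto (Idx r) (\<lambda>x y. (x::int) < y)"
  by unfold_locales auto

lemma e_image_neg:
  assumes "a + l \<le> 2*d"
  shows "uminus ` (ee d ` {a..<a+l}) = ee d ` {2*d-(a+l)..<2*d-a}"
proof (intro equalityI subsetI)
  fix x assume "x \<in> uminus ` (ee d ` {a..<a+l})"
  then obtain k where k: "k \<in> {a..<a+l}" "x = - ee d k" by auto
  then have "x = ee d (2*d - 1 - k)" using e_neg[of k d] assms by auto
  moreover have "2*d - 1 - k \<in> {2*d-(a+l)..<2*d-a}" using k assms by auto
  ultimately show "x \<in> ee d ` {2*d-(a+l)..<2*d-a}" by blast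
next
  fix x assume "x \<in> ee d ` {2*d-(a+l)..<2*d-a}"
  then obtain k where k: "k \<in> {2*d-(a+l)..<2*d-a}" "x = ee d k" by auto
  define k' where "k' = 2*d - 1 - k"
  have k'r: "k' \<in> {a..<a+l}" using k assms by (auto simp: k'_def)
  have "2*d - 1 - k' = k" using k assms by (auto simp: k'_def)
  then have "x = - ee d k'" using e_neg[of k' d] k k'r assms by auto
  then show "x \<in> uminus ` (ee d ` {a..<a+l})" using k'r by blast
qed

lemma e_image_pos:
  assumes "d + s + l \<le> 2*d"
  shows "ee d ` {d+s..<d+s+l} = {int s + 1 .. int s + int l}"
proof (intro equalityI subsetI)
  fix x assume "x \<in> ee d ` {d+s..<d+s+l}"
  then obtain k where k: "k \<in> {d+s..<d+s+l}" "x = ee d k" by auto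
  then have "x = int k - int d + 1" using sgnl_nth[of k d] assms by auto
  then show "x \<in> {int s + 1 .. int s + int l}" using k by auto
next
  fix x assume x: "x \<in> {int s + 1 .. int s + int l}"
  define k where "k = nat (x + int d - 1)"
  have kr: "k \<in> {d+s..<d+s+l}" using x by (auto simp: k_def)
  have "ee d k = int k - int d + 1" using sgnl_nth[of k d] kr assms by auto
  then have "ee d k = x" using x by (auto simp: k_def)
  then show "x \<in> ee d ` {d+s..<d+s+l}" using kr by blast
qed

locale blk =
  fixes r d :: nat and lam :: "int \<Rightarrow> nat"
  assumes symm: "\<And>i. i \<in> Idx r \<Longrightarrow> lam (- i) = lam i"
    and tot: "sum lam (Idx r) = 2*d"
begin

definition st :: "int \<Rightarrow> nat" where "st i = offs (Idx r) (\<lambda>x y. x < y) lam i"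

lemma st_bound: "i \<in> Idx r \<Longrightarrow> st i + lam i \<le> 2*d"
  using sto.GC2[OF sto_Idx] tot unfolding st_def by metis

lemma st_mono: "i \<in> Idx r \<Longrightarrow> i' \<in> Idx r \<Longrightarrow> i < i' \<Longrightarrow> st i + lam i \<le> st i'"
  using sto.GC1[OF sto_Idx] unfolding st_def by metis

lemma st_neg: "i \<in> Idx r \<Longrightarrow> st (- i) + st i + lam i = 2*d"
proof -
  assume i: "i \<in> Idx r"
  have "offs (Idx r) (\<lambda>x y. x < y) lam (- i) + offs (Idx r) (\<lambda>x y. x < y) lam i + lam i = sum lam (Idx r)"
    by (rule sto.GC4[OF sto_Idx, where ng=uminus]) (auto simp: Idx_neg symm i)
  then show ?thesis using tot unfolding st_def by simp
qed

lemma half: "sum lam {x\<in>Idx r. x < 0} = d"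
proof -
  have un: "Idx r = {x\<in>Idx r. x < 0} \<union> {x\<in>Idx r. 0 < x}" by (auto simp: Idx_def)
  have A: "sum lam (Idx r) = sum lam {x\<in>Idx r. x < 0} + sum lam {x\<in>Idx r. 0 < x}"
    by (subst un, rule sum.union_disjoint) auto
  have B: "{x\<in>Idx r. x < 0} = uminus ` {x\<in>Idx r. 0 < x}"
  proof (intro equalityI subsetI)
    fix x assume "x \<in> {x\<in>Idx r. x < 0}"
    then have "-x \<in> {x\<in>Idx r. 0 < x}" "x = - (-x)" using Idx_neg by auto
    then show "x \<in> uminus ` {x\<in>Idx r. 0 < x}" by blast
  qed (auto simp: Idx_neg)
  have "sum lam {x\<in>Idx r. x < 0} = sum (lam \<circ> uminus) {x\<in>Idx r. 0 < x}"
    unfolding B by (simp add: sum.reindex)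
  also have "\<dots> = sum lam {x\<in>Idx r. 0 < x}" by (rule sum.cong) (auto simp: symm)
  finally have C: "sum lam {x\<in>Idx r. x < 0} = sum lam {x\<in>Idx r. 0 < x}" .
  show ?thesis using A C tot by linarith
qed

lemma st_pos: assumes "i \<in> Idx r" "0 < i" shows "st i = d + (\<Sum>k\<in>{1..i-1}. lam k)"
proof -
  have un: "{x\<in>Idx r. x < i} = {x\<in>Idx r. x < 0} \<union> {1..i-1}" using assms by (auto simp: Idx_def)
  have "st i = sum lam ({x\<in>Idx r. x < 0} \<union> {1..i-1})" unfolding st_def offs_def un ..
  also have "\<dots> = sum lam {x\<in>Idx r. x < 0} + sum lam {1..i-1}"
    by (rule sum.union_disjoint) auto
  finally show ?thesis using half by simp
qed

lemma Rset_pos: assumes "i \<in> Idx r" "0 < i" shows "Rset lam i = ee d ` {st i..<st i + lam i}"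
proof -
  define s where "s = (\<Sum>k\<in>{1..i-1}. lam k)"
  have "{1..i} = insert i {1..i-1}" using assms by auto
  then have s2: "(\<Sum>k\<in>{1..i}. lam k) = s + lam i" by (simp add: s_def add.commute)
  have "Rset lam i = {int (\<Sum>k\<in>{1..i-1}. lam k) + 1 .. int (\<Sum>k\<in>{1..i}. lam k)}"
    using assms unfolding Rset_def Rpos_def by simp
  also have "\<dots> = {int s + 1 .. int s + int (lam i)}" unfolding s_def[symmetric] s2 by simp
  finally have "Rset lam i = {int s + 1 .. int s + int (lam i)}" .
  moreover have "st i = d + s" using st_pos[OF assms] s_def by simp
  ultimately show ?thesis using e_image_pos[of d s "lam i"] st_bound[OF assms(1)] by simp
qed

lemma Rset_e: assumes "i \<in> Idx r" shows "Rset lam i = ee d ` {st i..<st i + lam i}"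
proof (cases "0 < i")
  case True then show ?thesis using Rset_pos assms by simp
next
  case False
  then have neg: "i < 0" using Idx_nz[OF assms] by simp
  have mi: "- i \<in> Idx r" "0 < - i" using assms neg Idx_neg by auto
  have "Rset lam i = uminus ` Rset lam (- i)" using neg mi by (simp add: Rset_def)
  also have "\<dots> = uminus ` (ee d ` {st (-i)..<st (-i) + lam (-i)})" using Rset_pos[OF mi] by simp
  also have "\<dots> = ee d ` {2*d - (st (-i) + lam (-i))..<2*d - st (-i)}"
    by (rule arg_cong[where f="\<lambda>X. uminus ` X"] refl e_image_neg[OF st_bound[OF mi(1)]])+
  also have "2*d - (st (-i) + lam (-i)) = st i" using st_neg[OF mi(1)] by simp
  also have "2*d - st (-i) = st i + lam i" using st_neg[OF mi(1)] symm[OF assms] by simp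
  finally show ?thesis .
qed

lemma Rset_S: "i \<in> Idx r \<Longrightarrow> Rset lam i \<subseteq> sgnset d"
  using Rset_e st_bound e_in by fastforce

lemma Rset_card: "i \<in> Idx r \<Longrightarrow> card (Rset lam i) = lam i"
proof -
  assume i: "i \<in> Idx r"
  have "inj_on (ee d) {st i..<st i + lam i}"
    by (rule inj_on_subset[OF inj_e]) (use st_bound[OF i] in auto)
  then show ?thesis using Rset_e[OF i] by (simp add: card_image)
qed

lemma Rset_lt: assumes "i \<in> Idx r" "i' \<in> Idx r" "i < i'" "a \<in> Rset lam i" "b \<in> Rset lam i'"
  shows "a < b"
proof -
  obtain k where k: "k \<in> {st i..<st i + lam i}" "a = ee d k" using assms Rset_e by auto
  obtain k' where k': "k' \<in> {st i'..<st i' + lam i'}" "b = ee d k'" using assms Rset_e by auto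
  have "k < k'" using k k' st_mono[OF assms(1-3)] by auto
  moreover have "k' < 2*d" using k' st_bound[OF assms(2)] by auto
  ultimately show ?thesis using e_mono k k' by simp
qed

lemma Rset_uniq: "i \<in> Idx r \<Longrightarrow> i' \<in> Idx r \<Longrightarrow> a \<in> Rset lam i \<Longrightarrow> a \<in> Rset lam i' \<Longrightarrow> i = i'"
  using Rset_lt by (metis less_irrefl linorder_neqE)

lemma Rset_cover: assumes "a \<in> sgnset d" shows "\<exists>i\<in>Idx r. a \<in> Rset lam i"
proof -
  obtain k where k: "k < 2*d" "ee d k = a" using e_surj[OF assms] by blast
  have "\<exists>c\<in>Idx r. offs (Idx r) (\<lambda>x y. x < y) lam c \<le> k \<and> k < offs (Idx r) (\<lambda>x y. x < y) lam c + lam c"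
    by (rule sto.GC3[OF sto_Idx]) (use k tot in simp)
  then obtain i where i: "i \<in> Idx r" "st i \<le> k" "k < st i + lam i"
    unfolding st_def by blast
  then show ?thesis using Rset_e[OF i(1)] k by auto
qed

lemma Rset_neg: "Rset lam (- i) = uminus ` Rset lam i" if "i \<in> Idx r"
proof (cases "0 < i")
  case True then show ?thesis by (simp add: Rset_def)
next
  case False
  then have "i < 0" using Idx_nz[OF that] by simp
  then show ?thesis by (simp add: Rset_def image_image)
qed

lemma Rset_sign: "i \<in> Idx r \<Longrightarrow> a \<in> Rset lam i \<Longrightarrow> (0 < a \<longleftrightarrow> 0 < i)"
proof -
  assume i: "i \<in> Idx r" and a: "a \<in> Rset lam i"
  have n1: "0 \<le> (\<Sum>x = 1..i - 1. int (lam x))" "0 \<le> (\<Sum>x = 1..- i - 1. int (lam x))"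
    by (auto intro: sum_nonneg)
  show ?thesis
  proof (cases "0 < i")
    case True then show ?thesis using a n1 by (auto simp: Rset_def Rpos_def)
  next
    case False then show ?thesis using a n1 by (auto simp: Rset_def Rpos_def)
  qed
qed

end



lemma sorted_wrt_concat_map2:
  assumes "sorted_wrt Q xs" "sorted_wrt P ys"
    and "\<And>a a' b b'. Q a a' \<Longrightarrow> R (f a b) (f a' b')"
    and "\<And>a b b'. P b b' \<Longrightarrow> R (f a b) (f a b')"
  shows "sorted_wrt R (concat (map (\<lambda>a. map (f a) ys) xs))"
  using assms(1)
proof (induction xs)
  case Nil then show ?case by simp
next
  case (Cons a xs)
  have s1: "sorted_wrt R (map (f a) ys)"
    unfolding sorted_wrt_map by (rule sorted_wrt_mono_rel[OF _ assms(2)]) (use assms(4) in blast)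
  have s2: "sorted_wrt R (concat (map (\<lambda>a. map (f a) ys) xs))" using Cons by simp
  have s3: "\<forall>x\<in>set (map (f a) ys). \<forall>y\<in>set (concat (map (\<lambda>a. map (f a) ys) xs)). R x y"
    using Cons.prems assms(3) by auto
  show ?case using s1 s2 s3 by (simp add: sorted_wrt_append)
qed

lemma takeWhile_set_sorted:
  assumes "sorted_wrt R xs" "c \<in> set xs" "\<And>x. \<not> R x x"
    "\<And>x y. x \<in> set xs \<Longrightarrow> y \<in> set xs \<Longrightarrow> R x y \<Longrightarrow> \<not> R y x"
  shows "set (takeWhile (\<lambda>x. x \<noteq> c) xs) = {x\<in>set xs. R x c}"
  using assms
proof (induction xs)
  case Nil then show ?case by simp
next
  case (Cons y ys)
  show ?case
  proof (cases "y = c")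
    case True
    have "{x\<in>set (y # ys). R x c} = {}"
    proof -
      have "\<not> R x c" if "x \<in> set (y # ys)" for x
      proof (cases "x = c")
        case True then show ?thesis using Cons.prems(3) by simp
      next
        case False
        then have "x \<in> set ys" using that \<open>y = c\<close> by simp
        then have "R c x" using Cons.prems(1) \<open>y = c\<close> by simp
        then show ?thesis using Cons.prems(4)[of c x] Cons.prems(2) \<open>x \<in> set ys\<close> by simp
      qed
      then show ?thesis by blast
    qed
    then show ?thesis using True by simp
  next
    case False
    then have cys: "c \<in> set ys" using Cons.prems(2) by simp
    have Ryc: "R y c" using Cons.prems(1) cys by simp
    have sy: "sorted_wrt R ys" using Cons.prems(1) by simp
    have asy: "\<And>x z. x \<in> set ys \<Longrightarrow> z \<in> set ys \<Longrightarrow> R x z \<Longrightarrow> \<not> R z x"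
      using Cons.prems(4) by simp
    have IH: "set (takeWhile (\<lambda>x. x \<noteq> c) ys) = {x\<in>set ys. R x c}"
      by (rule Cons.IH[OF sy cys Cons.prems(3) asy])
    have "set (takeWhile (\<lambda>x. x \<noteq> c) (y # ys)) = insert y (set (takeWhile (\<lambda>x. x \<noteq> c) ys))"
      using False by simp
    also have "\<dots> = insert y {x\<in>set ys. R x c}" using IH by simp
    also have "\<dots> = {x\<in>set (y # ys). R x c}" using Ryc by auto
    finally show ?thesis .
  qed
qed

lemma sorted_wrt_irr_distinct: "sorted_wrt R xs \<Longrightarrow> (\<And>x. \<not> R x x) \<Longrightarrow> distinct xs"
  by (induction xs) auto

lemma sum_list_takeWhile_sorted:
  assumes "sorted_wrt R xs" "c \<in> set xs" "\<And>x. \<not> R x x"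
    "\<And>x y. x \<in> set xs \<Longrightarrow> y \<in> set xs \<Longrightarrow> R x y \<Longrightarrow> \<not> R y x"
  shows "sum_list (map g (takeWhile (\<lambda>x. x \<noteq> c) xs)) = (\<Sum>x\<in>{x\<in>set xs. R x c}. g x)"
proof -
  have "distinct xs" using assms(1,3) by (rule sorted_wrt_irr_distinct)
  then have "distinct (takeWhile (\<lambda>x. x \<noteq> c) xs)" by (rule distinct_takeWhile)
  then show ?thesis using takeWhile_set_sorted[OF assms]
    by (simp add: sum_list_distinct_conv_sum_set)
qed

lemma concat_nth_cell:
  assumes "distinct xs" "c \<in> set xs" "t < length (f c)"
  shows "concat (map f xs) ! (sum_list (map (length \<circ> f) (takeWhile (\<lambda>x. x \<noteq> c) xs)) + t) = f c ! t"
  using assms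
proof (induction xs)
  case Nil then show ?case by simp
next
  case (Cons y ys)
  show ?case
  proof (cases "y = c")
    case True then show ?thesis using Cons.prems by (simp add: nth_append)
  next
    case False
    then have "c \<in> set ys" using Cons.prems by simp
    then show ?thesis using Cons False by (simp add: nth_append add.assoc)
  qed
qed

lemma length_concat_map: "length (concat (map f xs)) = sum_list (map (length \<circ> f) xs)"
  by (induction xs) auto

lemma sorted_Idxl: "sorted_wrt (<) (Idxl r)"
  by (auto simp: Idxl_def sorted_wrt_append sorted_wrt_upto)

lemma set_Idxl: "set (Idxl r) = Idx r"
  by (auto simp: Idxl_def Idx_def)

lemma sorted_rev_Idxl: "sorted_wrt (>) (rev (Idxl r))"
  using sorted_Idxl by (simp add: sorted_wrt_rev)

definition Rr :: "int \<times> int \<Rightarrow> int \<times> int \<Rightarrow> bool" where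
  "Rr c c' = (snd c < snd c' \<or> (snd c = snd c' \<and> fst c' < fst c))"

definition Rf :: "int \<times> int \<Rightarrow> int \<times> int \<Rightarrow> bool" where
  "Rf c c' = (fst c < fst c' \<or> (fst c = fst c' \<and> snd c' < snd c))"

lemma fill_cells_eq: "fill_cells r = concat (map (\<lambda>i. map (\<lambda>j. (i,j)) (rev (Idxl r))) (Idxl r))"
  unfolding fill_cells_def by simp

lemma read_cells_eq: "read_cells r = concat (map (\<lambda>j. map (\<lambda>i. (i,j)) (rev (Idxl r))) (Idxl r))"
  unfolding read_cells_def by simp

lemma sorted_fill: "sorted_wrt Rf (fill_cells r)"
  unfolding fill_cells_eq
  by (rule sorted_wrt_concat_map2[OF sorted_Idxl sorted_rev_Idxl]) (auto simp: Rf_def)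

lemma sorted_read: "sorted_wrt Rr (read_cells r)"
  unfolding read_cells_eq
  by (rule sorted_wrt_concat_map2[OF sorted_Idxl sorted_rev_Idxl]) (auto simp: Rr_def)

lemma set_fill: "set (fill_cells r) = Idx r \<times> Idx r"
  unfolding fill_cells_eq by (auto simp: set_Idxl)

lemma set_read: "set (read_cells r) = Idx r \<times> Idx r"
  unfolding read_cells_eq by (auto simp: set_Idxl)

lemma Rf_irr: "\<not> Rf x x" by (simp add: Rf_def)
lemma Rr_irr: "\<not> Rr x x" by (simp add: Rr_def)
lemma Rf_asym: "Rf x y \<Longrightarrow> \<not> Rf y x" by (auto simp: Rf_def)
lemma Rr_asym: "Rr x y \<Longrightarrow> \<not> Rr y x" by (auto simp: Rr_def)

lemma distinct_fill: "distinct (fill_cells r)"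
  using sorted_fill[of r] Rf_irr by (rule sorted_wrt_irr_distinct)

lemma distinct_read: "distinct (read_cells r)"
  using sorted_read[of r] Rr_irr by (rule sorted_wrt_irr_distinct)

lemma sto_Rf: "sto (Idx r \<times> Idx r) Rf"
  by unfold_locales (auto simp: Rf_def)

lemma sto_Rr: "sto (Idx r \<times> Idx r) Rr"
  by unfold_locales (auto simp: Rr_def)



lemma Idx_uminus_image: "uminus ` Idx r = Idx r"
proof (intro equalityI subsetI)
  fix x assume "x \<in> uminus ` Idx r" then show "x \<in> Idx r" using Idx_neg by auto
next
  fix x assume "x \<in> Idx r" then have "-x \<in> Idx r" "x = - (-x)" using Idx_neg by auto
  then show "x \<in> uminus ` Idx r" by blast
qed

locale mat =
  fixes r d :: nat and A :: "int \<Rightarrow> int \<Rightarrow> nat"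
  assumes d1: "d \<ge> 1" and r1: "r \<ge> 1"
    and symA: "\<And>i j. i \<in> Idx r \<Longrightarrow> j \<in> Idx r \<Longrightarrow> A i j = A (-i) (-j)"
    and totA: "(\<Sum>i\<in>Idx r. \<Sum>j\<in>Idx r. A i j) = 2*d"
begin

lemma ro_sym: "i \<in> Idx r \<Longrightarrow> ro r A (- i) = ro r A i"
proof -
  assume i: "i \<in> Idx r"
  have inj: "inj_on uminus (Idx r)" by (auto simp: inj_on_def)
  have im: "uminus ` Idx r = Idx r" by (rule Idx_uminus_image)
  have "ro r A (- i) = (\<Sum>j\<in>Idx r. A (-i) j)" by (simp add: ro_def)
  also have "\<dots> = (\<Sum>j\<in>uminus ` Idx r. A (-i) j)" using im by simp
  also have "\<dots> = (\<Sum>j\<in>Idx r. A (-i) (-j))" using sum.reindex[OF inj] by simp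
  also have "\<dots> = (\<Sum>j\<in>Idx r. A i j)"
  proof (rule sum.cong)
    fix x assume "x \<in> Idx r" then show "A (-i) (-x) = A i x" using symA[OF i] by metis
  qed simp
  finally show ?thesis by (simp add: ro_def)
qed

lemma co_sym: "j \<in> Idx r \<Longrightarrow> co r A (- j) = co r A j"
proof -
  assume j: "j \<in> Idx r"
  have inj: "inj_on uminus (Idx r)" by (auto simp: inj_on_def)
  have im: "uminus ` Idx r = Idx r" by (rule Idx_uminus_image)
  have "co r A (- j) = (\<Sum>i\<in>Idx r. A i (-j))" by (simp add: co_def)
  also have "\<dots> = (\<Sum>i\<in>uminus ` Idx r. A i (-j))" using im by simp
  also have "\<dots> = (\<Sum>i\<in>Idx r. A (-i) (-j))" using sum.reindex[OF inj] by simp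
  also have "\<dots> = (\<Sum>i\<in>Idx r. A i j)"
  proof (rule sum.cong)
    fix x assume "x \<in> Idx r" then show "A (-x) (-j) = A x j" using symA[OF _ j] by metis
  qed simp
  finally show ?thesis by (simp add: co_def)
qed

lemma ro_tot: "sum (ro r A) (Idx r) = 2*d"
  using totA by (simp add: ro_def)

lemma co_tot: "sum (co r A) (Idx r) = 2*d"
  unfolding co_def by (subst sum.swap) (rule totA)

sublocale L: blk r d "ro r A"
  by unfold_locales (auto simp: ro_sym ro_tot)

sublocale M: blk r d "co r A"
  by unfold_locales (auto simp: co_sym co_tot)

abbreviation "X2 \<equiv> Idx r \<times> Idx r"
definition aw :: "int \<times> int \<Rightarrow> nat" where "aw c = A (fst c) (snd c)"
definition rof :: "int \<times> int \<Rightarrow> nat" where "rof c = offs X2 Rr aw c"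
definition fof :: "int \<times> int \<Rightarrow> nat" where "fof c = offs X2 Rf aw c"

lemma aw_prod: "sum aw (P \<times> Q) = (\<Sum>x\<in>P. \<Sum>y\<in>Q. A x y)"
  by (simp add: sum.cartesian_product aw_def case_prod_beta)

lemma aw_tot: "sum aw X2 = 2*d"
  using totA by (simp add: aw_prod)

lemma rof_bound: "c \<in> X2 \<Longrightarrow> rof c + aw c \<le> 2*d"
  using sto.GC2[OF sto_Rr[of r], where c=c and w=aw] aw_tot by (simp add: rof_def)

lemma fof_bound: "c \<in> X2 \<Longrightarrow> fof c + aw c \<le> 2*d"
  using sto.GC2[OF sto_Rf[of r], where c=c and w=aw] aw_tot by (simp add: fof_def)

lemma rof_neg: assumes c: "c \<in> X2" shows "rof (- fst c, - snd c) + rof c + aw c = 2*d"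
proof -
  have "offs X2 Rr aw ((\<lambda>c. (- fst c, - snd c)) c) + offs X2 Rr aw c + aw c = sum aw X2"
  proof (rule sto.GC4[OF sto_Rr[of r]])
    show "\<And>c. c \<in> X2 \<Longrightarrow> (- fst c, - snd c) \<in> X2" by (auto simp: Idx_neg)
    show "\<And>c. c \<in> X2 \<Longrightarrow> (- fst (- fst c, - snd c), - snd (- fst c, - snd c)) = c" by auto
    show "\<And>c c'. c \<in> X2 \<Longrightarrow> c' \<in> X2 \<Longrightarrow> Rr c' (- fst c, - snd c) = Rr c (- fst c', - snd c')"
      by (auto simp: Rr_def)
    show "\<And>c. c \<in> X2 \<Longrightarrow> aw (- fst c, - snd c) = aw c"
      unfolding aw_def using symA by (metis fst_conv snd_conv mem_Times_iff)
  qed (rule c)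
  then show ?thesis using aw_tot by (simp add: rof_def)
qed

lemma fof_neg: assumes c: "c \<in> X2" shows "fof (- fst c, - snd c) + fof c + aw c = 2*d"
proof -
  have "offs X2 Rf aw ((\<lambda>c. (- fst c, - snd c)) c) + offs X2 Rf aw c + aw c = sum aw X2"
  proof (rule sto.GC4[OF sto_Rf[of r]])
    show "\<And>c. c \<in> X2 \<Longrightarrow> (- fst c, - snd c) \<in> X2" by (auto simp: Idx_neg)
    show "\<And>c. c \<in> X2 \<Longrightarrow> (- fst (- fst c, - snd c), - snd (- fst c, - snd c)) = c" by auto
    show "\<And>c c'. c \<in> X2 \<Longrightarrow> c' \<in> X2 \<Longrightarrow> Rf c' (- fst c, - snd c) = Rf c (- fst c', - snd c')"
      by (auto simp: Rf_def)
    show "\<And>c. c \<in> X2 \<Longrightarrow> aw (- fst c, - snd c) = aw c"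
      unfolding aw_def using symA by (metis fst_conv snd_conv mem_Times_iff)
  qed (rule c)
  then show ?thesis using aw_tot by (simp add: fof_def)
qed

lemma rof_dec: assumes "i \<in> Idx r" "j \<in> Idx r"
  shows "rof (i,j) = M.st j + (\<Sum>x\<in>{x\<in>Idx r. i < x}. A x j)"
proof -
  let ?P = "Idx r \<times> {y\<in>Idx r. y < j}"
  let ?Q = "{x\<in>Idx r. i < x} \<times> {j}"
  have eq: "{c'\<in>X2. Rr c' (i,j)} = ?P \<union> ?Q" using assms by (auto simp: Rr_def)
  have disj: "?P \<inter> ?Q = {}" by auto
  have "rof (i,j) = sum aw (?P \<union> ?Q)" unfolding rof_def offs_def eq ..
  also have "\<dots> = sum aw ?P + sum aw ?Q" by (rule sum.union_disjoint) (use disj in auto)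
  also have "sum aw ?P = (\<Sum>y\<in>{y\<in>Idx r. y < j}. \<Sum>x\<in>Idx r. A x y)"
    unfolding aw_prod by (rule sum.swap)
  also have "\<dots> = M.st j" by (simp add: M.st_def offs_def co_def)
  also have "sum aw ?Q = (\<Sum>x\<in>{x\<in>Idx r. i < x}. A x j)"
    by (simp add: aw_prod)
  finally show ?thesis .
qed

lemma fof_dec: assumes "i \<in> Idx r" "j \<in> Idx r"
  shows "fof (i,j) = L.st i + (\<Sum>y\<in>{y\<in>Idx r. j < y}. A i y)"
proof -
  let ?P = "{x\<in>Idx r. x < i} \<times> Idx r"
  let ?Q = "{i} \<times> {y\<in>Idx r. j < y}"
  have eq: "{c'\<in>X2. Rf c' (i,j)} = ?P \<union> ?Q" using assms by (auto simp: Rf_def)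
  have disj: "?P \<inter> ?Q = {}" by auto
  have "fof (i,j) = sum aw (?P \<union> ?Q)" unfolding fof_def offs_def eq ..
  also have "\<dots> = sum aw ?P + sum aw ?Q" by (rule sum.union_disjoint) (use disj in auto)
  also have "sum aw ?P = (\<Sum>x\<in>{x\<in>Idx r. x < i}. \<Sum>y\<in>Idx r. A x y)"
    by (simp add: aw_prod)
  also have "\<dots> = L.st i" by (simp add: L.st_def offs_def ro_def)
  also have "sum aw ?Q = (\<Sum>y\<in>{y\<in>Idx r. j < y}. A i y)"
    by (simp add: aw_prod)
  finally show ?thesis .
qed

lemma part_le: assumes "i \<in> Idx r" shows "(\<Sum>x\<in>{x\<in>Idx r. i < x}. f x) + f i \<le> (\<Sum>x\<in>Idx r. (f x :: nat))"
proof -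
  have "(\<Sum>x\<in>{x\<in>Idx r. i < x}. f x) + f i = sum f (insert i {x\<in>Idx r. i < x})" by simp
  also have "\<dots> \<le> sum f (Idx r)" by (rule sum_mono2) (use assms in auto)
  finally show ?thesis .
qed

lemma P_sub: assumes "i \<in> Idx r" "j \<in> Idx r"
  shows "M.st j \<le> rof (i,j)" "rof (i,j) + A i j \<le> M.st j + co r A j"
  using rof_dec[OF assms] part_le[OF assms(1), of "\<lambda>x. A x j"] by (auto simp: co_def)

lemma V_sub: assumes "i \<in> Idx r" "j \<in> Idx r"
  shows "L.st i \<le> fof (i,j)" "fof (i,j) + A i j \<le> L.st i + ro r A i"
  using fof_dec[OF assms] part_le[OF assms(2), of "\<lambda>y. A i y"] by (auto simp: ro_def)

end



context mat begin

lemma aw_case: "(\<lambda>(x,y). A x y) = aw"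
  by (auto simp: aw_def fun_eq_iff)

lemma fo_cell: assumes "(i,j) \<in> X2" shows "cell_offset r A i j = fof (i,j)"
proof -
  have "cell_offset r A i j = sum_list (map aw (takeWhile (\<lambda>c. c \<noteq> (i,j)) (fill_cells r)))"
    unfolding cell_offset_def aw_case ..
  also have "\<dots> = (\<Sum>x\<in>{x\<in>set (fill_cells r). Rf x (i,j)}. aw x)"
    by (rule sum_list_takeWhile_sorted[OF sorted_fill]) (use assms set_fill Rf_irr Rf_asym in auto)
  finally show ?thesis by (simp add: fof_def offs_def set_fill)
qed

lemma content_len: assumes "(i,j) \<in> X2" shows "length (cell_content r d A i j) = A i j"
  using fof_bound[OF assms] fo_cell[OF assms] by (simp add: cell_content_def len_sgnl aw_def)

lemma content_nth: assumes "(i,j) \<in> X2" "t < A i j"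
  shows "cell_content r d A i j ! t = ee d (fof (i,j) + (A i j - 1 - t))"
proof -
  have b: "fof (i,j) + A i j \<le> 2*d" using fof_bound[OF assms(1)] by (simp add: aw_def)
  let ?l = "take (A i j) (drop (fof (i,j)) (sgnl d))"
  have ll: "length ?l = A i j" using b by (simp add: len_sgnl)
  have "cell_content r d A i j ! t = rev ?l ! t" by (simp add: cell_content_def fo_cell[OF assms(1)])
  also have "\<dots> = ?l ! (A i j - 1 - t)" using assms(2) ll by (simp add: rev_nth)
  also have "\<dots> = ee d (fof (i,j) + (A i j - 1 - t))" using assms(2) b by (simp add: len_sgnl)
  finally show ?thesis .
qed

abbreviation "cc \<equiv> (\<lambda>(i,j). cell_content r d A i j)"

lemma cc_len: "c \<in> X2 \<Longrightarrow> (length \<circ> cc) c = aw c"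
  by (cases c) (simp add: content_len aw_def)

lemma ro_read: assumes "c \<in> X2"
  shows "sum_list (map (length \<circ> cc) (takeWhile (\<lambda>x. x \<noteq> c) (read_cells r))) = rof c"
proof -
  have "sum_list (map (length \<circ> cc) (takeWhile (\<lambda>x. x \<noteq> c) (read_cells r)))
      = (\<Sum>x\<in>{x\<in>set (read_cells r). Rr x c}. (length \<circ> cc) x)"
    by (rule sum_list_takeWhile_sorted[OF sorted_read]) (use assms set_read Rr_irr Rr_asym in auto)
  also have "\<dots> = (\<Sum>x\<in>{x\<in>X2. Rr x c}. aw x)"
    by (rule sum.cong) (auto simp: set_read content_len aw_def)
  finally show ?thesis by (simp add: rof_def offs_def)
qed

lemma zseq_len: "length (zseq r d A) = 2*d"
proof -
  have "length (zseq r d A) = sum_list (map (length \<circ> cc) (read_cells r))"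
    unfolding zseq_def by (rule length_concat_map)
  also have "\<dots> = sum (length \<circ> cc) (set (read_cells r))"
    using distinct_read by (simp add: sum_list_distinct_conv_sum_set)
  also have "\<dots> = sum aw X2" by (rule sum.cong) (auto simp: set_read content_len aw_def)
  finally show ?thesis using aw_tot by simp
qed

lemma zseq_nth: assumes "(i,j) \<in> X2" "t < A i j"
  shows "zseq r d A ! (rof (i,j) + t) = ee d (fof (i,j) + (A i j - 1 - t))"
proof -
  have "zseq r d A ! (rof (i,j) + t) = concat (map cc (read_cells r)) !
      (sum_list (map (length \<circ> cc) (takeWhile (\<lambda>x. x \<noteq> (i,j)) (read_cells r))) + t)"
    unfolding zseq_def ro_read[OF assms(1)] ..
  also have "\<dots> = cc (i,j) ! t"
    by (rule concat_nth_cell[OF distinct_read]) (use assms set_read content_len in auto)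
  finally show ?thesis using content_nth[OF assms] by simp
qed

abbreviation "yt \<equiv> ytilde r d A"

lemma yt_e: assumes "k < 2*d" shows "yt (ee d k) = zseq r d A ! k"
proof -
  have "map_of (zip (sgnl d) (zseq r d A)) (sgnl d ! k) = Some (zseq r d A ! k)"
    by (rule map_of_zip_nth) (use assms distinct_sgnl zseq_len len_sgnl in auto)
  then show ?thesis by (simp add: ytilde_def)
qed

lemma yt_cell: assumes "(i,j) \<in> X2" "t < A i j"
  shows "yt (ee d (rof (i,j) + t)) = ee d (fof (i,j) + (A i j - 1 - t))"
proof -
  have "rof (i,j) + t < 2*d" using rof_bound[OF assms(1)] assms(2) by (simp add: aw_def)
  then show ?thesis using yt_e zseq_nth[OF assms] by simp
qed

lemma yt_out: assumes "x \<notin> sgnset d" shows "yt x = x"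
proof -
  have "fst ` set (zip (sgnl d) (zseq r d A)) = set (sgnl d)"
    using zseq_len len_sgnl by (metis map_fst_zip set_map)
  then have "map_of (zip (sgnl d) (zseq r d A)) x = None"
    using assms set_sgnl by (simp add: map_of_eq_None_iff)
  then show ?thesis by (simp add: ytilde_def)
qed

lemma cell_cover: assumes "k < 2*d" shows "\<exists>c\<in>X2. rof c \<le> k \<and> k < rof c + aw c"
  using sto.GC3[OF sto_Rr[of r], where k=k and w=aw] assms aw_tot by (simp add: rof_def)

lemma S_cell: assumes "x \<in> sgnset d"
  shows "\<exists>i j t. (i,j) \<in> X2 \<and> t < A i j \<and> x = ee d (rof (i,j) + t)"
proof -
  obtain k where k: "k < 2*d" "ee d k = x" using e_surj[OF assms] by blast
  obtain c where c: "c \<in> X2" "rof c \<le> k" "k < rof c + aw c" using cell_cover[OF k(1)] by blast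
  obtain i j where "c = (i,j)" by (cases c)
  then have "(i,j) \<in> X2 \<and> k - rof (i,j) < A i j \<and> x = ee d (rof (i,j) + (k - rof (i,j)))"
    using c k by (auto simp: aw_def)
  then show ?thesis by blast
qed

lemma fof_unique: assumes "c \<in> X2" "c' \<in> X2" "fof c \<le> k" "k < fof c + aw c" "fof c' \<le> k" "k < fof c' + aw c'"
  shows "c = c'"
  using sto.GC_unique[OF sto_Rf[of r], where w=aw] assms unfolding fof_def by blast

lemma rof_unique: assumes "c \<in> X2" "c' \<in> X2" "rof c \<le> k" "k < rof c + aw c" "rof c' \<le> k" "k < rof c' + aw c'"
  shows "c = c'"
  using sto.GC_unique[OF sto_Rr[of r], where w=aw] assms unfolding rof_def by blast

lemma yt_S: assumes "x \<in> sgnset d" shows "yt x \<in> sgnset d"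
proof -
  obtain i j t where c: "(i,j) \<in> X2" "t < A i j" "x = ee d (rof (i,j) + t)" using S_cell[OF assms] by blast
  have "fof (i,j) + A i j \<le> 2*d" using fof_bound[OF c(1)] by (simp add: aw_def)
  then show ?thesis using yt_cell[OF c(1,2)] c(2,3) e_in by simp
qed

lemma yt_inj: "inj_on yt (sgnset d)"
proof (rule inj_onI)
  fix x x' assume x: "x \<in> sgnset d" and x': "x' \<in> sgnset d" and eq: "yt x = yt x'"
  obtain i j t where c: "(i,j) \<in> X2" "t < A i j" "x = ee d (rof (i,j) + t)" using S_cell[OF x] by blast
  obtain i' j' t' where c': "(i',j') \<in> X2" "t' < A i' j'" "x' = ee d (rof (i',j') + t')" using S_cell[OF x'] by blast
  have b: "fof (i,j) + A i j \<le> 2*d" "fof (i',j') + A i' j' \<le> 2*d"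
    using fof_bound[OF c(1)] fof_bound[OF c'(1)] by (auto simp: aw_def)
  have "ee d (fof (i,j) + (A i j - 1 - t)) = ee d (fof (i',j') + (A i' j' - 1 - t'))"
    using eq c c' yt_cell by simp
  then have k: "fof (i,j) + (A i j - 1 - t) = fof (i',j') + (A i' j' - 1 - t')"
    using b c(2) c'(2) e_inj_iff by simp
  have "(i,j) = (i',j')"
    by (rule fof_unique[OF c(1) c'(1), where k="fof (i,j) + (A i j - 1 - t)"]) (use k c(2) c'(2) in \<open>auto simp: aw_def\<close>)
  moreover have "t = t'" using k c(2) c'(2) \<open>(i,j) = (i',j')\<close> by auto
  ultimately show "x = x'" using c c' by auto
qed

lemma yt_img: "yt ` sgnset d = sgnset d"
  by (rule endo_inj_surj) (auto simp: yt_S yt_inj)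

lemma yt_odd: "yt (- x) = - yt x"
proof (cases "x \<in> sgnset d")
  case False
  then have "- x \<notin> sgnset d" using S_neg_iff by blast
  then show ?thesis using False yt_out by simp
next
  case True
  obtain i j t where c: "(i,j) \<in> X2" "t < A i j" "x = ee d (rof (i,j) + t)" using S_cell[OF True] by blast
  have c': "(-i,-j) \<in> X2" using c(1) Idx_neg by auto
  have a': "A (-i) (-j) = A i j" using symA c(1) by auto
  have r: "rof (-i,-j) + rof (i,j) + A i j = 2*d" using rof_neg[OF c(1)] by (simp add: aw_def)
  have f: "fof (-i,-j) + fof (i,j) + A i j = 2*d" using fof_neg[OF c(1)] by (simp add: aw_def)
  have t': "A i j - 1 - t < A (-i) (-j)" using a' c(2) by simp
  have "- x = ee d (2*d - 1 - (rof (i,j) + t))" using e_neg[of "rof (i,j) + t" d] c r by simp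
  also have "2*d - 1 - (rof (i,j) + t) = rof (-i,-j) + (A i j - 1 - t)" using r c(2) by simp
  finally have mx: "- x = ee d (rof (-i,-j) + (A (-i) (-j) - 1 - t))" using a' by simp
  have "yt (- x) = ee d (fof (-i,-j) + (A (-i) (-j) - 1 - (A (-i) (-j) - 1 - t)))"
    unfolding mx by (rule yt_cell[OF c']) (use a' c(2) in simp)
  also have "\<dots> = ee d (fof (-i,-j) + t)" using a' c(2) by simp
  also have "fof (-i,-j) + t = 2*d - 1 - (fof (i,j) + (A i j - 1 - t))" using f c(2) by simp
  also have kk: "fof (i,j) + (A i j - 1 - t) < 2*d" using f c(2) by simp
  have "ee d (2*d - 1 - (fof (i,j) + (A i j - 1 - t))) = - ee d (fof (i,j) + (A i j - 1 - t))"
    by (rule e_neg[OF kk])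
  also have "\<dots> = - yt x" using yt_cell[OF c(1,2)] c(3) by simp
  finally show ?thesis .
qed

lemma yt_WC: "yt \<in> WC d"
  unfolding WC_def using yt_img yt_inj yt_odd yt_out by (auto simp: bij_betw_def)

end



context mat begin

abbreviation "Lam \<equiv> Rset (ro r A)"
abbreviation "Bk \<equiv> Rset (co r A)"

definition Cset :: "(int \<Rightarrow> int) set" where
  "Cset = {v \<in> WC d. \<forall>i\<in>Idx r. \<forall>j\<in>Idx r. card (Lam i \<inter> v ` Bk j) = A i j}"

definition K :: "(int \<Rightarrow> int) \<Rightarrow> int \<Rightarrow> int \<Rightarrow> int set" where
  "K v i j = {a \<in> Bk j. v a \<in> Lam i}"

definition good :: "(int \<Rightarrow> int) \<Rightarrow> bool" where
  "good v = ((\<forall>j\<in>Idx r. \<forall>a\<in>Bk j. \<forall>b\<in>Bk j. a < b \<longrightarrow> v b < v a) \<and>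
     (\<forall>i\<in>Idx r. \<forall>a\<in>sgnset d. \<forall>b\<in>sgnset d. v a \<in> Lam i \<longrightarrow> v b \<in> Lam i \<longrightarrow> v a < v b \<longrightarrow> b < a))"

lemma finite_Bk: "finite (Bk j)"
  by (simp add: Rset_def Rpos_def)

lemma finite_K: "finite (K v i j)"
  unfolding K_def using finite_Bk by simp

lemma K_sub: "K v i j \<subseteq> Bk j" by (auto simp: K_def)

lemma K_card_eq: assumes v: "v \<in> WC d" shows "card (Lam i \<inter> v ` Bk j) = card (K v i j)"
proof -
  have "Lam i \<inter> v ` Bk j = v ` K v i j" by (auto simp: K_def)
  moreover have "inj_on v (K v i j)" using WC_bij[OF v] by (meson bij_is_inj inj_on_subset subset_UNIV)
  ultimately show ?thesis by (simp add: card_image)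
qed

lemma Cset_iff: "v \<in> Cset \<longleftrightarrow> v \<in> WC d \<and> (\<forall>i\<in>Idx r. \<forall>j\<in>Idx r. card (K v i j) = A i j)"
  unfolding Cset_def using K_card_eq by auto

lemma Bk_S: "j \<in> Idx r \<Longrightarrow> a \<in> Bk j \<Longrightarrow> a \<in> sgnset d"
  using M.Rset_S by blast

lemma K_disj: assumes "(x,y) \<in> X2" "(i,j) \<in> X2" "(x,y) \<noteq> (i,j)" shows "K v x y \<inter> K v i j = {}"
proof -
  have "False" if "a \<in> K v x y" "a \<in> K v i j" for a
  proof -
    have "y = j" using that assms M.Rset_uniq by (auto simp: K_def)
    moreover have "x = i" using that assms L.Rset_uniq by (auto simp: K_def)
    ultimately show False using assms(3) by simp
  qed
  then show ?thesis by blast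
qed

lemma row_ex: assumes v: "v \<in> WC d" and a: "a \<in> sgnset d" shows "\<exists>i\<in>Idx r. v a \<in> Lam i"
  using L.Rset_cover[OF WC_in[OF v a]] .

lemma col_ex: assumes a: "a \<in> sgnset d" shows "\<exists>j\<in>Idx r. a \<in> Bk j"
  using M.Rset_cover[OF a] .

definition Pairs :: "((int \<times> int) \<times> (int \<times> int)) set" where
  "Pairs = {p \<in> X2 \<times> X2. fst (fst p) < fst (snd p) \<and> snd (fst p) < snd (snd p)}"

definition Blk :: "(int \<Rightarrow> int) \<Rightarrow> (int \<times> int) set" where
  "Blk v = (\<Union>p\<in>Pairs. K v (fst (fst p)) (snd (fst p)) \<times> K v (fst (snd p)) (snd (snd p)))"

definition NI0 :: nat where
  "NI0 = (\<Sum>p\<in>Pairs. A (fst (fst p)) (snd (fst p)) * A (fst (snd p)) (snd (snd p)))"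

lemma finite_Pairs: "finite Pairs"
  by (rule finite_subset[of _ "X2 \<times> X2"]) (auto simp: Pairs_def)

lemma Blk_sub: assumes v: "v \<in> WC d" shows "Blk v \<subseteq> NIset d v"
proof
  fix z assume "z \<in> Blk v"
  then obtain x y i j a b where p: "((x,y),(i,j)) \<in> Pairs" and z: "z = (a,b)"
    and a: "a \<in> K v x y" and b: "b \<in> K v i j"
    unfolding Blk_def by force
  have idx: "x \<in> Idx r" "y \<in> Idx r" "i \<in> Idx r" "j \<in> Idx r" "x < i" "y < j"
    using p by (auto simp: Pairs_def)
  have ab: "a \<in> Bk y" "v a \<in> Lam x" "b \<in> Bk j" "v b \<in> Lam i" using a b by (auto simp: K_def)
  have "a < b" using M.Rset_lt[OF idx(2) idx(4) idx(6) ab(1) ab(3)] .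
  moreover have "v a < v b" using L.Rset_lt[OF idx(1) idx(3) idx(5) ab(2) ab(4)] .
  moreover have "a \<in> sgnset d" "b \<in> sgnset d" using Bk_S idx ab by auto
  ultimately show "z \<in> NIset d v" using z by (simp add: NIset_def)
qed

lemma card_Blk: assumes v: "v \<in> Cset" shows "card (Blk v) = NI0"
proof -
  let ?F = "\<lambda>p. K v (fst (fst p)) (snd (fst p)) \<times> K v (fst (snd p)) (snd (snd p))"
  have disj: "\<forall>p\<in>Pairs. \<forall>q\<in>Pairs. p \<noteq> q \<longrightarrow> ?F p \<inter> ?F q = {}"
  proof (intro ballI impI)
    fix p q assume p: "p \<in> Pairs" and q: "q \<in> Pairs" and ne: "p \<noteq> q"
    have pX: "fst p \<in> X2" "snd p \<in> X2" using p by (auto simp: Pairs_def)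
    have qX: "fst q \<in> X2" "snd q \<in> X2" using q by (auto simp: Pairs_def)
    have "fst p \<noteq> fst q \<or> snd p \<noteq> snd q" using ne by (metis prod.expand)
    then show "?F p \<inter> ?F q = {}"
    proof
      assume "fst p \<noteq> fst q"
      then have "K v (fst (fst p)) (snd (fst p)) \<inter> K v (fst (fst q)) (snd (fst q)) = {}"
        using K_disj[of "fst (fst p)" "snd (fst p)" "fst (fst q)" "snd (fst q)"] pX qX by auto
      then show ?thesis by blast
    next
      assume "snd p \<noteq> snd q"
      then have "K v (fst (snd p)) (snd (snd p)) \<inter> K v (fst (snd q)) (snd (snd q)) = {}"
        using K_disj[of "fst (snd p)" "snd (snd p)" "fst (snd q)" "snd (snd q)"] pX qX by auto
      then show ?thesis by blast
    qed
  qed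
  have "card (Blk v) = (\<Sum>p\<in>Pairs. card (?F p))"
    unfolding Blk_def by (rule card_UN_disjoint[OF finite_Pairs]) (use finite_K disj in auto)
  also have "\<dots> = NI0" unfolding NI0_def
  proof (rule sum.cong)
    fix p assume p: "p \<in> Pairs"
    then have "fst (fst p) \<in> Idx r" "snd (fst p) \<in> Idx r" "fst (snd p) \<in> Idx r" "snd (snd p) \<in> Idx r"
      by (auto simp: Pairs_def)
    then show "card (?F p) = A (fst (fst p)) (snd (fst p)) * A (fst (snd p)) (snd (snd p))"
      using v by (simp add: card_cartesian_product Cset_iff)
  qed simp
  finally show ?thesis .
qed

lemma finite_NIset: "finite (NIset d v)"
  by (rule finite_subset[of _ "sgnset d \<times> sgnset d"]) (auto simp: NIset_def)

lemma NI_ge: "v \<in> Cset \<Longrightarrow> NI0 \<le> card (NIset d v)"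
  using card_Blk Blk_sub card_mono[OF finite_NIset] Cset_iff by metis

lemma good_NI: assumes v: "v \<in> WC d" and g: "good v" shows "NIset d v \<subseteq> Blk v"
proof
  fix z assume "z \<in> NIset d v"
  then obtain a b where z: "z = (a,b)" and ab: "a \<in> sgnset d" "b \<in> sgnset d" "a < b" "v a < v b"
    by (auto simp: NIset_def)
  obtain y where y: "y \<in> Idx r" "a \<in> Bk y" using col_ex[OF ab(1)] by blast
  obtain j where j: "j \<in> Idx r" "b \<in> Bk j" using col_ex[OF ab(2)] by blast
  obtain x where x: "x \<in> Idx r" "v a \<in> Lam x" using row_ex[OF v ab(1)] by blast
  obtain i where i: "i \<in> Idx r" "v b \<in> Lam i" using row_ex[OF v ab(2)] by blast
  have "y < j"
  proof (rule ccontr)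
    assume "\<not> y < j"
    then consider "j < y" | "j = y" by linarith
    then show False
    proof cases
      case 1 then show False using M.Rset_lt[OF j(1) y(1) 1 j(2) y(2)] ab(3) by simp
    next
      case 2 then show False using g y j ab unfolding good_def by force
    qed
  qed
  moreover have "x < i"
  proof (rule ccontr)
    assume "\<not> x < i"
    then consider "i < x" | "i = x" by linarith
    then show False
    proof cases
      case 1 then show False using L.Rset_lt[OF i(1) x(1) 1 i(2) x(2)] ab(4) by simp
    next
      case 2 then show False using g x i ab unfolding good_def by force
    qed
  qed
  ultimately have "((x,y),(i,j)) \<in> Pairs" using x y i j by (simp add: Pairs_def)
  moreover have "a \<in> K v x y" "b \<in> K v i j" using x y i j by (auto simp: K_def)
  ultimately show "z \<in> Blk v" unfolding Blk_def z by force
qed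

lemma Blk_pair_lt: assumes "(a,b) \<in> Blk v"
  shows "\<exists>x y i j. x \<in> Idx r \<and> y \<in> Idx r \<and> i \<in> Idx r \<and> j \<in> Idx r \<and> x < i \<and> y < j \<and>
     a \<in> Bk y \<and> v a \<in> Lam x \<and> b \<in> Bk j \<and> v b \<in> Lam i"
proof -
  obtain p where p: "p \<in> Pairs" "(a,b) \<in> K v (fst (fst p)) (snd (fst p)) \<times> K v (fst (snd p)) (snd (snd p))"
    using assms unfolding Blk_def by blast
  then show ?thesis unfolding Pairs_def K_def by (intro exI[of _ "fst (fst p)"] exI[of _ "snd (fst p)"]
     exI[of _ "fst (snd p)"] exI[of _ "snd (snd p)"]) auto
qed

lemma NI_good: assumes v: "v \<in> WC d" and sub: "NIset d v \<subseteq> Blk v" shows "good v"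
  unfolding good_def
proof (intro conjI ballI impI)
  fix j a b assume j: "j \<in> Idx r" and a: "a \<in> Bk j" and b: "b \<in> Bk j" and ab: "a < b"
  have S: "a \<in> sgnset d" "b \<in> sgnset d" using Bk_S j a b by auto
  show "v b < v a"
  proof (rule ccontr)
    assume "\<not> v b < v a"
    moreover have "v a \<noteq> v b" using WC_inj[OF v] ab by auto
    ultimately have "v a < v b" by simp
    then have "(a,b) \<in> Blk v" using sub S ab by (auto simp: NIset_def)
    then obtain y j' where "y \<in> Idx r" "j' \<in> Idx r" "y < j'" "a \<in> Bk y" "b \<in> Bk j'"
      using Blk_pair_lt by blast
    then show False using M.Rset_uniq j a b by (metis less_irrefl)
  qed
next
  fix i a b assume i: "i \<in> Idx r" and a: "a \<in> sgnset d" and b: "b \<in> sgnset d"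
    and va: "v a \<in> Lam i" and vb: "v b \<in> Lam i" and lt: "v a < v b"
  show "b < a"
  proof (rule ccontr)
    assume "\<not> b < a"
    moreover have "a \<noteq> b" using lt by auto
    ultimately have "a < b" by simp
    then have "(a,b) \<in> Blk v" using sub a b lt by (auto simp: NIset_def)
    then obtain x i' where "x \<in> Idx r" "i' \<in> Idx r" "x < i'" "v a \<in> Lam x" "v b \<in> Lam i'"
      using Blk_pair_lt by blast
    then show False using L.Rset_uniq i va vb by (metis less_irrefl)
  qed
qed

lemma good_iff_NI: assumes v: "v \<in> Cset" shows "good v \<longleftrightarrow> card (NIset d v) = NI0"
proof
  assume "good v"
  then have "NIset d v = Blk v" using good_NI Blk_sub v Cset_iff by blast
  then show "card (NIset d v) = NI0" using card_Blk[OF v] by simp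
next
  assume c: "card (NIset d v) = NI0"
  have vW: "v \<in> WC d" using v Cset_iff by simp
  have "Blk v = NIset d v"
    by (rule card_subset_eq[OF finite_NIset Blk_sub[OF vW]]) (use c card_Blk[OF v] in simp)
  then show "good v" using NI_good[OF vW] by simp
qed

end



context mat begin

definition Nq :: "(int \<times> int) set" where "Nq = {c \<in> X2. fst c < 0 \<and> 0 < snd c}"
definition NEG0 :: nat where "NEG0 = (\<Sum>c\<in>Nq. A (fst c) (snd c))"

lemma finite_Nq: "finite Nq" by (rule finite_subset[of _ X2]) (auto simp: Nq_def)

lemma NEG_card: assumes v: "v \<in> Cset" shows "card (NEGset d v) = NEG0"
proof -
  have vW: "v \<in> WC d" using v Cset_iff by simp
  have eq: "NEGset d v = (\<Union>c\<in>Nq. K v (fst c) (snd c))"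
  proof (intro equalityI subsetI)
    fix a assume "a \<in> NEGset d v"
    then have a: "a \<in> sgnset d" "0 < a" "v a < 0" by (auto simp: NEGset_def)
    obtain j where j: "j \<in> Idx r" "a \<in> Bk j" using col_ex[OF a(1)] by blast
    obtain x where x: "x \<in> Idx r" "v a \<in> Lam x" using row_ex[OF vW a(1)] by blast
    have "0 < j" using M.Rset_sign[OF j] a by simp
    moreover have "x < 0" using L.Rset_sign[OF x] a Idx_nz[OF x(1)] by auto
    ultimately have "(x,j) \<in> Nq" using x j by (simp add: Nq_def)
    moreover have "a \<in> K v x j" using x j by (simp add: K_def)
    ultimately show "a \<in> (\<Union>c\<in>Nq. K v (fst c) (snd c))" by force
  next
    fix a assume "a \<in> (\<Union>c\<in>Nq. K v (fst c) (snd c))"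
    then obtain i j where c: "(i,j) \<in> Nq" "a \<in> K v i j" by force
    have idx: "i \<in> Idx r" "j \<in> Idx r" "i < 0" "0 < j" using c(1) by (auto simp: Nq_def)
    have ab: "a \<in> Bk j" "v a \<in> Lam i" using c(2) by (auto simp: K_def)
    have aS: "a \<in> sgnset d" using Bk_S idx ab by auto
    have "0 < a" using M.Rset_sign[OF idx(2) ab(1)] idx by simp
    moreover have "\<not> 0 < v a" using L.Rset_sign[OF idx(1) ab(2)] idx by simp
    moreover have "v a \<noteq> 0" using WC_in[OF vW aS] by (auto simp: sgnset_def)
    ultimately show "a \<in> NEGset d v" using aS by (auto simp: NEGset_def)
  qed
  have disj: "\<forall>c\<in>Nq. \<forall>c'\<in>Nq. c \<noteq> c' \<longrightarrow> K v (fst c) (snd c) \<inter> K v (fst c') (snd c') = {}"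
    using K_disj unfolding Nq_def by (metis (no_types, lifting) mem_Collect_eq prod.collapse)
  have "card (NEGset d v) = (\<Sum>c\<in>Nq. card (K v (fst c) (snd c)))"
    unfolding eq by (rule card_UN_disjoint[OF finite_Nq]) (use finite_K disj in auto)
  also have "\<dots> = NEG0" unfolding NEG0_def
    by (rule sum.cong) (use v in \<open>auto simp: Cset_iff Nq_def\<close>)
  finally show ?thesis .
qed

lemma Lw_Cset: assumes v: "v \<in> Cset"
  shows "2 * Lw d v + card (NIset d v) = d * (2*d - 1) + NEG0"
  using length_identity[of v d] NEG_card[OF v] v Cset_iff by simp

lemma K_col_disj: "x \<in> Idx r \<Longrightarrow> x' \<in> Idx r \<Longrightarrow> j \<in> Idx r \<Longrightarrow> x \<noteq> x' \<Longrightarrow> K v x j \<inter> K v x' j = {}"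
  using K_disj by auto

lemma card_UK: assumes v: "v \<in> Cset" and j: "j \<in> Idx r" and sub: "I \<subseteq> Idx r"
  shows "card (\<Union>x\<in>I. K v x j) = (\<Sum>x\<in>I. A x j)"
proof -
  have fI: "finite I" using sub finite_Idx by (rule finite_subset)
  have "card (\<Union>x\<in>I. K v x j) = (\<Sum>x\<in>I. card (K v x j))"
    by (rule card_UN_disjoint[OF fI]) (use finite_K K_col_disj sub j in blast)+
  also have "\<dots> = (\<Sum>x\<in>I. A x j)" by (rule sum.cong) (use v sub j in \<open>auto simp: Cset_iff\<close>)
  finally show ?thesis .
qed

lemma row_rank:
  assumes v: "v \<in> Cset" and g: "good v" and j: "j \<in> Idx r" and a: "a \<in> Bk j"
    and x: "x \<in> Idx r" "v a \<in> Lam x"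
  shows "(\<Sum>y\<in>{y\<in>Idx r. x < y}. A y j) \<le> card {b\<in>Bk j. b < a}
       \<and> card {b\<in>Bk j. b < a} < (\<Sum>y\<in>{y\<in>Idx r. x \<le> y}. A y j)"
proof -
  have vW: "v \<in> WC d" using v Cset_iff by simp
  have g1: "\<And>a b. a \<in> Bk j \<Longrightarrow> b \<in> Bk j \<Longrightarrow> a < b \<Longrightarrow> v b < v a" using g j unfolding good_def by blast
  let ?T = "{b\<in>Bk j. b < a}"
  let ?U1 = "\<Union>y\<in>{y\<in>Idx r. x < y}. K v y j"
  let ?U2 = "\<Union>y\<in>{y\<in>Idx r. x \<le> y}. K v y j"
  have fT: "finite ?T" using finite_Bk by simp
  have fU2: "finite ?U2" using finite_K by auto
  have s1: "?U1 \<subseteq> ?T"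
  proof
    fix b assume "b \<in> ?U1"
    then obtain y where y: "y \<in> Idx r" "x < y" "b \<in> K v y j" by auto
    have b: "b \<in> Bk j" "v b \<in> Lam y" using y(3) by (auto simp: K_def)
    have lt: "v a < v b" using L.Rset_lt[OF x(1) y(1) y(2) x(2) b(2)] .
    have "b < a"
    proof (rule ccontr)
      assume "\<not> b < a"
      then have "a < b \<or> a = b" by auto
      then show False using g1[OF a b(1)] lt by auto
    qed
    then show "b \<in> ?T" using b by simp
  qed
  have s2: "?T \<subseteq> ?U2 - {a}"
  proof
    fix b assume "b \<in> ?T"
    then have b: "b \<in> Bk j" "b < a" by auto
    have lt: "v a < v b" using g1[OF b(1) a b(2)] .
    obtain y where y: "y \<in> Idx r" "v b \<in> Lam y" using row_ex[OF vW Bk_S[OF j b(1)]] by blast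
    have "x \<le> y"
    proof (rule ccontr)
      assume "\<not> x \<le> y" then have "y < x" by simp
      then show False using L.Rset_lt[OF y(1) x(1) _ y(2) x(2)] lt by simp
    qed
    then show "b \<in> ?U2 - {a}" using y b by (auto simp: K_def)
  qed
  have aU2: "a \<in> ?U2" using x a by (auto simp: K_def)
  have c1: "card ?U1 = (\<Sum>y\<in>{y\<in>Idx r. x < y}. A y j)" by (rule card_UK[OF v j]) auto
  have c2: "card ?U2 = (\<Sum>y\<in>{y\<in>Idx r. x \<le> y}. A y j)" by (rule card_UK[OF v j]) auto
  have "card ?U1 \<le> card ?T" by (rule card_mono[OF fT s1])
  moreover have "card ?T \<le> card (?U2 - {a})" by (rule card_mono) (use fU2 s2 in auto)
  moreover have "card (?U2 - {a}) < card ?U2" by (rule card_Diff1_less[OF fU2 aU2])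
  ultimately show ?thesis using c1 c2 by linarith
qed

lemma sum_ge_sub: "(\<Sum>y\<in>{y\<in>Idx r. x' \<le> y}. (f y :: nat)) \<le> (\<Sum>y\<in>{y\<in>Idx r. x < y}. f y)" if "x < x'"
  by (rule sum_mono2) (use that in auto)

lemma same_row:
  assumes v: "v \<in> Cset" "good v" and w: "w \<in> Cset" "good w" and a: "a \<in> sgnset d"
    and x: "x \<in> Idx r" "v a \<in> Lam x" and x': "x' \<in> Idx r" "w a \<in> Lam x'"
  shows "x = x'"
proof -
  obtain j where j: "j \<in> Idx r" "a \<in> Bk j" using col_ex[OF a] by blast
  have rv: "(\<Sum>y\<in>{y\<in>Idx r. x < y}. A y j) \<le> card {b\<in>Bk j. b < a}
       \<and> card {b\<in>Bk j. b < a} < (\<Sum>y\<in>{y\<in>Idx r. x \<le> y}. A y j)"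
    by (rule row_rank[OF v j(1) j(2) x])
  have rw: "(\<Sum>y\<in>{y\<in>Idx r. x' < y}. A y j) \<le> card {b\<in>Bk j. b < a}
       \<and> card {b\<in>Bk j. b < a} < (\<Sum>y\<in>{y\<in>Idx r. x' \<le> y}. A y j)"
    by (rule row_rank[OF w j(1) j(2) x'])
  show ?thesis
  proof (rule ccontr)
    assume "x \<noteq> x'"
    then consider "x < x'" | "x' < x" by linarith
    then show False
    proof cases
      case 1 then show False using sum_ge_sub[OF 1, of "\<lambda>y. A y j"] rv rw by linarith
    next
      case 2 then show False using sum_ge_sub[OF 2, of "\<lambda>y. A y j"] rv rw by linarith
    qed
  qed
qed

lemma order_transfer:
  assumes v: "v \<in> Cset" "good v" and w: "w \<in> Cset" "good w"
    and a: "a \<in> sgnset d" and b: "b \<in> sgnset d" and lt: "v a < v b"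
  shows "w a < w b"
proof -
  have vW: "v \<in> WC d" and wW: "w \<in> WC d" using v w Cset_iff by auto
  obtain x where x: "x \<in> Idx r" "v a \<in> Lam x" using row_ex[OF vW a] by blast
  obtain i where i: "i \<in> Idx r" "v b \<in> Lam i" using row_ex[OF vW b] by blast
  obtain x' where x': "x' \<in> Idx r" "w a \<in> Lam x'" using row_ex[OF wW a] by blast
  obtain i' where i': "i' \<in> Idx r" "w b \<in> Lam i'" using row_ex[OF wW b] by blast
  have xx: "x = x'" by (rule same_row[OF v w a x x'])
  have ii: "i = i'" by (rule same_row[OF v w b i i'])
  consider "x < i" | "i < x" | "x = i" by linarith
  then show ?thesis
  proof cases
    case 1 then show ?thesis using L.Rset_lt[OF x'(1) i'(1) _ x'(2) i'(2)] xx ii by simp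
  next
    case 2 then have "v b < v a" using L.Rset_lt[OF i(1) x(1) _ i(2) x(2)] by simp
    then show ?thesis using lt by simp
  next
    case 3
    have "b < a" using v(2) x i lt a b 3 unfolding good_def by blast
    moreover have "w a \<noteq> w b" using WC_inj[OF wW] \<open>b < a\<close> by auto
    moreover have "w b < w a \<Longrightarrow> a < b" using w(2) x' i' a b 3 xx ii unfolding good_def by blast
    ultimately show ?thesis by fastforce
  qed
qed

lemma rank_val: assumes v: "v \<in> WC d" and a: "a \<in> sgnset d"
  shows "v a = ee d (card {b\<in>sgnset d. v b < v a})"
proof -
  have "{y\<in>sgnset d. y < v a} = v ` {b\<in>sgnset d. v b < v a}"
  proof (intro equalityI subsetI)
    fix y assume "y \<in> {y\<in>sgnset d. y < v a}"
    then obtain b where "b \<in> sgnset d" "v b = y" "y < v a" using WC_surj[OF v] by blast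
    then show "y \<in> v ` {b\<in>sgnset d. v b < v a}" by blast
  next
    fix y assume "y \<in> v ` {b\<in>sgnset d. v b < v a}"
    then show "y \<in> {y\<in>sgnset d. y < v a}" using WC_in[OF v] by blast
  qed
  moreover have "inj_on v {b\<in>sgnset d. v b < v a}"
    using WC_bij[OF v] by (meson bij_is_inj inj_on_subset subset_UNIV)
  ultimately have "card {y\<in>sgnset d. y < v a} = card {b\<in>sgnset d. v b < v a}" by (simp add: card_image)
  then show ?thesis using rank_e[OF WC_in[OF v a]] by simp
qed

lemma good_unique:
  assumes v: "v \<in> Cset" "good v" and w: "w \<in> Cset" "good w"
  shows "v = w"
proof
  fix a
  have vW: "v \<in> WC d" and wW: "w \<in> WC d" using v w Cset_iff by auto
  show "v a = w a"
  proof (cases "a \<in> sgnset d")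
    case False then show ?thesis using WC_out vW wW by metis
  next
    case True
    have "{b\<in>sgnset d. v b < v a} = {b\<in>sgnset d. w b < w a}"
      using order_transfer[OF v w _ True] order_transfer[OF w v _ True] by blast
    then show ?thesis using rank_val[OF vW True] rank_val[OF wW True] by simp
  qed
qed

end



context mat begin

lemma rof_lt: "c \<in> X2 \<Longrightarrow> c' \<in> X2 \<Longrightarrow> Rr c c' \<Longrightarrow> rof c + aw c \<le> rof c'"
  unfolding rof_def by (rule sto.GC1[OF sto_Rr[of r]])

lemma fof_lt: "c \<in> X2 \<Longrightarrow> c' \<in> X2 \<Longrightarrow> Rf c c' \<Longrightarrow> fof c + aw c \<le> fof c'"
  unfolding fof_def by (rule sto.GC1[OF sto_Rf[of r]])

lemma cellB: assumes c: "(i,j) \<in> X2" and t: "t < A i j" shows "ee d (rof (i,j) + t) \<in> Bk j"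
proof -
  have j: "j \<in> Idx r" using c by auto
  have "rof (i,j) + t \<in> {M.st j..<M.st j + co r A j}" using P_sub[of i j] c t by auto
  then show ?thesis using M.Rset_e[OF j] by blast
qed

lemma cellL: assumes c: "(i,j) \<in> X2" and t: "t < A i j" shows "yt (ee d (rof (i,j) + t)) \<in> Lam i"
proof -
  have i: "i \<in> Idx r" using c by auto
  have "fof (i,j) + (A i j - 1 - t) \<in> {L.st i..<L.st i + ro r A i}" using V_sub[of i j] c t by auto
  then show ?thesis using L.Rset_e[OF i] yt_cell[OF c t] by auto
qed

lemma rk_bound: "(i,j) \<in> X2 \<Longrightarrow> t < A i j \<Longrightarrow> rof (i,j) + t < 2*d"
  using rof_bound[of "(i,j)"] by (auto simp: aw_def)

lemma fk_bound: "(i,j) \<in> X2 \<Longrightarrow> t < A i j \<Longrightarrow> fof (i,j) + (A i j - 1 - t) < 2*d"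
  using fof_bound[of "(i,j)"] by (auto simp: aw_def)

lemma yt_good: "good yt"
  unfolding good_def
proof (intro conjI ballI impI)
  fix j a b assume j: "j \<in> Idx r" and a: "a \<in> Bk j" and b: "b \<in> Bk j" and ab: "a < b"
  obtain x y t where cx: "(x,y) \<in> X2" "t < A x y" "a = ee d (rof (x,y) + t)"
    using S_cell[OF Bk_S[OF j a]] by blast
  obtain x' y' t' where cx': "(x',y') \<in> X2" "t' < A x' y'" "b = ee d (rof (x',y') + t')"
    using S_cell[OF Bk_S[OF j b]] by blast
  have "y = j" using cellB[OF cx(1,2)] cx(3) a M.Rset_uniq j cx(1) by auto
  have "y' = j" using cellB[OF cx'(1,2)] cx'(3) b M.Rset_uniq j cx'(1) by auto
  have klt: "rof (x,y) + t < rof (x',y') + t'"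
    using ab cx cx' e_mono_iff rk_bound by metis
  show "yt b < yt a"
  proof (cases "x = x'")
    case True
    then have "t < t'" using klt \<open>y = j\<close> \<open>y' = j\<close> by simp
    then have "fof (x',y') + (A x' y' - 1 - t') < fof (x,y) + (A x y - 1 - t)"
      using True \<open>y = j\<close> \<open>y' = j\<close> cx'(2) by simp
    then show ?thesis using yt_cell cx cx' e_mono fk_bound by metis
  next
    case False
    have "\<not> Rr (x',y') (x,y)"
    proof
      assume "Rr (x',y') (x,y)"
      then have "rof (x',y') + A x' y' \<le> rof (x,y)" using rof_lt cx(1) cx'(1) by (force simp: aw_def)
      then show False using klt cx'(2) by simp
    qed
    then have "Rr (x,y) (x',y')" using sto.total[OF sto_Rr[of r] cx(1) cx'(1)] False by auto
    then have "x' < x" using \<open>y = j\<close> \<open>y' = j\<close> by (simp add: Rr_def)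
    then have "Rf (x',y') (x,y)" using \<open>y = j\<close> \<open>y' = j\<close> by (simp add: Rf_def)
    then have "fof (x',y') + A x' y' \<le> fof (x,y)" using fof_lt cx(1) cx'(1) by (force simp: aw_def)
    then have "fof (x',y') + (A x' y' - 1 - t') < fof (x,y) + (A x y - 1 - t)" using cx'(2) by simp
    then show ?thesis using yt_cell cx cx' e_mono fk_bound by metis
  qed
next
  fix i a b assume i: "i \<in> Idx r" and a: "a \<in> sgnset d" and b: "b \<in> sgnset d"
    and va: "yt a \<in> Lam i" and vb: "yt b \<in> Lam i" and lt: "yt a < yt b"
  obtain x y t where cx: "(x,y) \<in> X2" "t < A x y" "a = ee d (rof (x,y) + t)"
    using S_cell[OF a] by blast
  obtain x' y' t' where cx': "(x',y') \<in> X2" "t' < A x' y'" "b = ee d (rof (x',y') + t')"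
    using S_cell[OF b] by blast
  have "x = i" using cellL[OF cx(1,2)] cx(3) va L.Rset_uniq i cx(1) by auto
  have "x' = i" using cellL[OF cx'(1,2)] cx'(3) vb L.Rset_uniq i cx'(1) by auto
  have ya: "yt a = ee d (fof (x,y) + (A x y - 1 - t))" using yt_cell cx by simp
  have yb: "yt b = ee d (fof (x',y') + (A x' y' - 1 - t'))" using yt_cell cx' by simp
  have klt: "fof (x,y) + (A x y - 1 - t) < fof (x',y') + (A x' y' - 1 - t')"
    using lt ya yb e_mono_iff fk_bound cx cx' by metis
  have "rof (x',y') + t' < rof (x,y) + t"
  proof (cases "y = y'")
    case True
    then have "t' < t" using klt \<open>x = i\<close> \<open>x' = i\<close> cx(2) cx'(2) by simp
    then show ?thesis using True \<open>x = i\<close> \<open>x' = i\<close> by simp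
  next
    case False
    have "\<not> Rf (x',y') (x,y)"
    proof
      assume "Rf (x',y') (x,y)"
      then have "fof (x',y') + A x' y' \<le> fof (x,y)" using fof_lt cx(1) cx'(1) by (force simp: aw_def)
      then show False using klt cx(2) by simp
    qed
    then have "Rf (x,y) (x',y')" using sto.total[OF sto_Rf[of r] cx(1) cx'(1)] False by auto
    then have "y' < y" using \<open>x = i\<close> \<open>x' = i\<close> by (simp add: Rf_def)
    then have "Rr (x',y') (x,y)" by (simp add: Rr_def)
    then have "rof (x',y') + A x' y' \<le> rof (x,y)" using rof_lt cx(1) cx'(1) by (force simp: aw_def)
    then show ?thesis using cx'(2) by simp
  qed
  then show "b < a" using cx(3) cx'(3) e_mono rk_bound cx(1,2) by metis
qed

lemma sum_eq_ge: assumes "finite I" "\<And>i. i \<in> I \<Longrightarrow> (g i :: nat) \<le> f i" "sum f I \<le> sum g I" "i \<in> I"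
  shows "f i = g i"
proof (rule ccontr)
  assume "f i \<noteq> g i"
  then have "g i < f i" using assms(2)[OF assms(4)] by simp
  then have "sum g I < sum f I" using sum_strict_mono_ex1[OF assms(1), of g f] assms by auto
  then show False using assms(3) by simp
qed

lemma yt_C: "yt \<in> Cset"
  unfolding Cset_iff
proof (intro conjI ballI)
  show "yt \<in> WC d" by (rule yt_WC)
next
  fix i j assume i: "i \<in> Idx r" and j: "j \<in> Idx r"
  have ge: "A x j \<le> card (K yt x j)" if x: "x \<in> Idx r" for x
  proof -
    let ?E = "ee d ` {rof (x,j)..<rof (x,j) + A x j}"
    have xj: "(x,j) \<in> X2" using x j by simp
    have "?E \<subseteq> K yt x j"
    proof
      fix a assume "a \<in> ?E"
      then obtain t where t: "t < A x j" "a = ee d (rof (x,j) + t)"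
        by (auto, metis add_diff_inverse_nat add_less_cancel_left not_less)
      then show "a \<in> K yt x j" using cellB[OF xj t(1)] cellL[OF xj t(1)] by (simp add: K_def)
    qed
    moreover have "card ?E = A x j"
    proof -
      have "inj_on (ee d) {rof (x,j)..<rof (x,j) + A x j}"
        by (rule inj_on_subset[OF inj_e]) (use rof_bound[OF xj] in \<open>auto simp: aw_def\<close>)
      then show ?thesis by (simp add: card_image)
    qed
    ultimately show ?thesis using card_mono[OF finite_K] by metis
  qed
  have "sum (\<lambda>x. card (K yt x j)) (Idx r) = card (\<Union>x\<in>Idx r. K yt x j)"
    by (rule card_UN_disjoint[symmetric]) (auto simp: finite_K K_col_disj j)
  also have "\<dots> \<le> card (Bk j)"
    by (rule card_mono[OF finite_Bk]) (use K_sub in blast)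
  also have "\<dots> = sum (\<lambda>x. A x j) (Idx r)" using M.Rset_card[OF j] by (simp add: co_def)
  finally have le: "sum (\<lambda>x. card (K yt x j)) (Idx r) \<le> sum (\<lambda>x. A x j) (Idx r)" .
  show "card (K yt i j) = A i j"
    using sum_eq_ge[OF finite_Idx ge le i] by simp
qed

end



context mat begin

lemma Wpar_iff: "u \<in> Wpar r d lam \<longleftrightarrow> u \<in> WC d \<and> (\<forall>i\<in>Idx r. u ` Rset lam i = Rset lam i)"
  by (simp add: Wpar_def)

lemma WC_inj_on: "u \<in> WC d \<Longrightarrow> inj_on u X"
  using WC_bij by (meson bij_is_inj inj_on_subset subset_UNIV)

lemma comp_in_C:
  assumes y: "y \<in> Cset" and u: "u \<in> Wpar r d (ro r A)" and p: "p \<in> Wpar r d (co r A)"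
  shows "u \<circ> y \<circ> p \<in> Cset"
proof -
  have uW: "u \<in> WC d" and pW: "p \<in> WC d" and yW: "y \<in> WC d" using u p y by (auto simp: Wpar_iff Cset_def)
  have W: "u \<circ> y \<circ> p \<in> WC d" using WC_comp uW yW pW by blast
  have "card (Lam i \<inter> (u \<circ> y \<circ> p) ` Bk j) = A i j" if i: "i \<in> Idx r" and j: "j \<in> Idx r" for i j
  proof -
    have pj: "p ` Bk j = Bk j" using p j by (simp add: Wpar_iff)
    have ui: "u ` Lam i = Lam i" using u i by (simp add: Wpar_iff)
    have "(u \<circ> y \<circ> p) ` Bk j = u ` (y ` (p ` Bk j))" by (simp add: image_image)
    then have "(u \<circ> y \<circ> p) ` Bk j = u ` (y ` Bk j)" using pj by simp
    then have "Lam i \<inter> (u \<circ> y \<circ> p) ` Bk j = u ` (Lam i \<inter> y ` Bk j)"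
      using ui image_Int[OF WC_inj_on[OF uW, of UNIV]] by (metis inj_on_subset subset_UNIV)
    moreover have "card (u ` (Lam i \<inter> y ` Bk j)) = card (Lam i \<inter> y ` Bk j)"
      by (rule card_image[OF WC_inj_on[OF uW]])
    ultimately show ?thesis using y i j by (simp add: Cset_def)
  qed
  then show ?thesis using W by (simp add: Cset_def)
qed

definition rowf :: "(int \<Rightarrow> int) \<Rightarrow> int \<Rightarrow> int" where
  "rowf v a = (THE i. i \<in> Idx r \<and> v a \<in> Lam i)"
definition colf :: "int \<Rightarrow> int" where
  "colf a = (THE j. j \<in> Idx r \<and> a \<in> Bk j)"

lemma rowf: assumes "v \<in> WC d" "a \<in> sgnset d" shows "rowf v a \<in> Idx r \<and> v a \<in> Lam (rowf v a)"
proof -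
  obtain i where i: "i \<in> Idx r" "v a \<in> Lam i" using row_ex[OF assms] by blast
  have "rowf v a = i" unfolding rowf_def
    by (rule the_equality) (use i L.Rset_uniq in blast)+
  then show ?thesis using i by simp
qed

lemma rowf_eq: "v \<in> WC d \<Longrightarrow> a \<in> sgnset d \<Longrightarrow> i \<in> Idx r \<Longrightarrow> v a \<in> Lam i \<Longrightarrow> rowf v a = i"
  using rowf L.Rset_uniq by blast

lemma colf: assumes "a \<in> sgnset d" shows "colf a \<in> Idx r \<and> a \<in> Bk (colf a)"
proof -
  obtain j where j: "j \<in> Idx r" "a \<in> Bk j" using col_ex[OF assms] by blast
  have "colf a = j" unfolding colf_def
    by (rule the_equality) (use j M.Rset_uniq in blast)+
  then show ?thesis using j by simp
qed

lemma colf_eq: "a \<in> sgnset d \<Longrightarrow> j \<in> Idx r \<Longrightarrow> a \<in> Bk j \<Longrightarrow> colf a = j"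
  using colf M.Rset_uniq by blast

lemma neg_in_R: "blk r d lam \<Longrightarrow> i \<in> Idx r \<Longrightarrow> x \<in> Rset lam i \<Longrightarrow> - x \<in> Rset lam (- i)"
  using blk.Rset_neg by fastforce

lemma C_sub_dcoset:
  assumes y: "y \<in> Cset" and v: "v \<in> Cset"
  shows "\<exists>u p. u \<in> Wpar r d (ro r A) \<and> p \<in> Wpar r d (co r A) \<and> v = u \<circ> y \<circ> p"
proof -
  have yW: "y \<in> WC d" and vW: "v \<in> WC d" using y v by (auto simp: Cset_iff)
  define \<beta> where "\<beta> i j = (SOME f. bij_betw f (K v i j) (K y i j))" for i j
  have \<beta>: "bij_betw (\<beta> i j) (K v i j) (K y i j)" if "i \<in> Idx r" "j \<in> Idx r" for i j
  proof -
    have "card (K v i j) = card (K y i j)" using y v that by (simp add: Cset_iff)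
    then have "\<exists>f. bij_betw f (K v i j) (K y i j)" by (rule finite_same_card_bij[OF finite_K finite_K])
    then show ?thesis unfolding \<beta>_def by (rule someI_ex)
  qed
  define p0 where "p0 a = \<beta> (rowf v a) (colf a) a" for a
  define p where "p a = (if a \<in> sgnset d then (if 0 < a then p0 a else - p0 (- a)) else a)" for a
  have KP0: "p0 a \<in> K y (rowf v a) (colf a)" if a: "a \<in> sgnset d" for a
  proof -
    have "a \<in> K v (rowf v a) (colf a)" using rowf[OF vW a] colf[OF a] by (simp add: K_def)
    then show ?thesis using \<beta>[of "rowf v a" "colf a"] rowf[OF vW a] colf[OF a]
      unfolding p0_def by (meson bij_betwE)
  qed
  have KP: "p a \<in> Bk (colf a) \<and> y (p a) \<in> Lam (rowf v a)" if a: "a \<in> sgnset d" for a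
  proof (cases "0 < a")
    case True then show ?thesis using KP0[OF a] a by (simp add: p_def K_def)
  next
    case False
    have ma: "- a \<in> sgnset d" using S_neg a by simp
    have k: "p0 (-a) \<in> Bk (colf (-a))" "y (p0 (-a)) \<in> Lam (rowf v (-a))" using KP0[OF ma] by (auto simp: K_def)
    have ci: "colf (-a) \<in> Idx r" "- a \<in> Bk (colf (-a))" using colf[OF ma] by auto
    have ri: "rowf v (-a) \<in> Idx r" "v (-a) \<in> Lam (rowf v (-a))" using rowf[OF vW ma] by auto
    have "a \<in> Bk (- colf (-a))" using neg_in_R[OF M.blk_axioms ci] by simp
    then have c: "colf a = - colf (-a)" using colf_eq[OF a Idx_neg[OF ci(1)]] by simp
    have "v a \<in> Lam (- rowf v (-a))" using neg_in_R[OF L.blk_axioms ri] WC_odd[OF vW, of a] by simp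
    then have rr: "rowf v a = - rowf v (-a)" using rowf_eq[OF vW a Idx_neg[OF ri(1)]] by simp
    have pa: "p a = - p0 (-a)" using False a by (simp add: p_def)
    have "p a \<in> Bk (colf a)" using neg_in_R[OF M.blk_axioms ci(1) k(1)] pa c by simp
    moreover have "y (p a) \<in> Lam (rowf v a)"
      using neg_in_R[OF L.blk_axioms ri(1) k(2)] pa rr WC_odd[OF yW] by simp
    ultimately show ?thesis ..
  qed
  have pS: "p a \<in> sgnset d" if "a \<in> sgnset d" for a
    using KP[OF that] colf[OF that] Bk_S by blast
  have p_odd: "p (- a) = - p a" for a
  proof (cases "a \<in> sgnset d")
    case False then have "- a \<notin> sgnset d" using S_neg_iff by blast
    then show ?thesis using False by (simp add: p_def)
  next
    case True
    then have "- a \<in> sgnset d" using S_neg by blast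
    moreover have "a \<noteq> 0" using True by (auto simp: sgnset_def)
    ultimately show ?thesis using True by (auto simp: p_def)
  qed
  have sgn_col: "a \<in> sgnset d \<Longrightarrow> (0 < a \<longleftrightarrow> 0 < colf a)" for a
    using colf M.Rset_sign by blast
  have p_inj: "inj_on p (sgnset d)"
  proof (rule inj_onI)
    fix a b assume a: "a \<in> sgnset d" and b: "b \<in> sgnset d" and eq: "p a = p b"
    have cc: "colf a = colf b" using KP[OF a] KP[OF b] eq colf[OF a] colf[OF b] M.Rset_uniq by metis
    have rr: "rowf v a = rowf v b" using KP[OF a] KP[OF b] eq rowf[OF vW a] rowf[OF vW b] L.Rset_uniq by metis
    have sg: "0 < a \<longleftrightarrow> 0 < b" using sgn_col[OF a] sgn_col[OF b] cc by simp
    show "a = b"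
    proof (cases "0 < a")
      case True
      then have "p0 a = p0 b" using eq sg a b by (simp add: p_def)
      moreover have "a \<in> K v (rowf v a) (colf a)" "b \<in> K v (rowf v a) (colf a)"
        using rowf[OF vW a] colf[OF a] rowf[OF vW b] colf[OF b] cc rr by (auto simp: K_def)
      ultimately show ?thesis using \<beta>[of "rowf v a" "colf a"] rowf[OF vW a] colf[OF a]
        unfolding p0_def bij_betw_def inj_on_def using cc rr by metis
    next
      case False
      then have "p0 (-a) = p0 (-b)" using eq sg a b by (simp add: p_def)
      have ma: "- a \<in> sgnset d" and mb: "- b \<in> sgnset d" using a b S_neg by auto
      have c2: "colf (-a) = colf (-b)"
        using KP[OF ma] KP[OF mb] p_odd eq colf[OF ma] colf[OF mb] M.Rset_uniq by metis
      have r2: "rowf v (-a) = rowf v (-b)"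
        using KP[OF ma] KP[OF mb] p_odd eq rowf[OF vW ma] rowf[OF vW mb] L.Rset_uniq by metis
      have "- a \<in> K v (rowf v (-a)) (colf (-a))" "- b \<in> K v (rowf v (-a)) (colf (-a))"
        using rowf[OF vW ma] colf[OF ma] rowf[OF vW mb] colf[OF mb] c2 r2 by (auto simp: K_def)
      then have "- a = - b" using \<open>p0 (-a) = p0 (-b)\<close> \<beta>[of "rowf v (-a)" "colf (-a)"] rowf[OF vW ma] colf[OF ma]
        unfolding p0_def bij_betw_def inj_on_def using c2 r2 by metis
      then show ?thesis by simp
    qed
  qed
  have p_img: "p ` sgnset d = sgnset d" by (rule endo_inj_surj) (use pS p_inj in auto)
  have pW: "p \<in> WC d" unfolding WC_def bij_betw_def using p_inj p_img p_odd by (simp add: p_def)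
  have pP: "p \<in> Wpar r d (co r A)"
    unfolding Wpar_iff
  proof (intro conjI ballI)
    show "p \<in> WC d" by (rule pW)
  next
    fix j assume j: "j \<in> Idx r"
    have sub: "p ` Bk j \<subseteq> Bk j"
    proof
      fix z assume "z \<in> p ` Bk j"
      then obtain a where a: "a \<in> Bk j" "z = p a" by auto
      have aS: "a \<in> sgnset d" using Bk_S[OF j a(1)] .
      then have "colf a = j" using colf_eq j a by simp
      then show "z \<in> Bk j" using KP[OF aS] a by simp
    qed
    have "card (p ` Bk j) = card (Bk j)" by (rule card_image[OF WC_inj_on[OF pW]])
    then show "p ` Bk j = Bk j" using card_subset_eq[OF finite_Bk sub] by simp
  qed
  define u where "u = v \<circ> inv p \<circ> inv y"
  have uW: "u \<in> WC d" unfolding u_def using WC_comp WC_inv vW pW yW by blast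
  have uP: "u \<in> Wpar r d (ro r A)"
    unfolding Wpar_iff
  proof (intro conjI ballI)
    show "u \<in> WC d" by (rule uW)
  next
    fix i assume i: "i \<in> Idx r"
    have sub: "u ` Lam i \<subseteq> Lam i"
    proof
      fix z assume "z \<in> u ` Lam i"
      then obtain w where w: "w \<in> Lam i" "z = u w" by auto
      have wS: "w \<in> sgnset d" using L.Rset_S[OF i] w(1) by blast
      define a where "a = inv p (inv y w)"
      have aS: "a \<in> sgnset d" unfolding a_def using WC_in WC_inv pW yW wS by blast
      have ypa: "y (p a) = w" unfolding a_def by (simp add: WC_f_inv[OF pW] WC_f_inv[OF yW])
      then have "rowf v a = i" using KP[OF aS] L.Rset_uniq i w(1) rowf[OF vW aS] by metis
      then have "v a \<in> Lam i" using rowf[OF vW aS] by simp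
      moreover have "z = v a" using w(2) by (simp add: u_def a_def)
      ultimately show "z \<in> Lam i" by simp
    qed
    have "card (u ` Lam i) = card (Lam i)" by (rule card_image[OF WC_inj_on[OF uW]])
    moreover have "finite (Lam i)" by (simp add: Rset_def Rpos_def)
    ultimately show "u ` Lam i = Lam i" using card_subset_eq sub by metis
  qed
  have "v = u \<circ> y \<circ> p"
  proof
    fix a show "v a = (u \<circ> y \<circ> p) a" using WC_inv_f pW yW by (simp add: u_def)
  qed
  then show ?thesis using uP pP by blast
qed

lemma dcoset_eq: assumes y: "y \<in> Cset" shows "dcoset r d (ro r A) (co r A) y = Cset"
proof
  show "dcoset r d (ro r A) (co r A) y \<subseteq> Cset"
    unfolding dcoset_def using comp_in_C[OF y] by blast
  show "Cset \<subseteq> dcoset r d (ro r A) (co r A) y"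
    unfolding dcoset_def using C_sub_dcoset[OF y] by blast
qed

lemma dcoset_of_eq: "dcoset_of r d A = Cset"
  unfolding dcoset_of_def
proof (rule the_equality)
  show "\<exists>y\<in>WC d. Cset = dcoset r d (ro r A) (co r A) y \<and>
         (\<forall>i\<in>Idx r. \<forall>j\<in>Idx r. card (Lam i \<inter> y ` Bk j) = A i j)"
    using yt_C dcoset_eq[OF yt_C] by (intro bexI[of _ yt]) (auto simp: Cset_def)
next
  fix D assume "\<exists>y\<in>WC d. D = dcoset r d (ro r A) (co r A) y \<and>
         (\<forall>i\<in>Idx r. \<forall>j\<in>Idx r. card (Lam i \<inter> y ` Bk j) = A i j)"
  then obtain y where "y \<in> WC d" "D = dcoset r d (ro r A) (co r A) y"
       "\<forall>i\<in>Idx r. \<forall>j\<in>Idx r. card (Lam i \<inter> y ` Bk j) = A i j" by blast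
  then show "D = Cset" using dcoset_eq by (simp add: Cset_def)
qed

end



context mat begin

lemma lenC_yt_max: assumes v: "v \<in> Cset" shows "Lw d v \<le> Lw d yt"
proof -
  have "card (NIset d yt) = NI0" using good_iff_NI[OF yt_C] yt_good by simp
  moreover have "NI0 \<le> card (NIset d v)" by (rule NI_ge[OF v])
  ultimately show ?thesis using Lw_Cset[OF v] Lw_Cset[OF yt_C] by linarith
qed

lemma wplus_eq: "wplus r d A = yt"
  unfolding wplus_def dcoset_of_eq
proof (rule the_equality)
  show "yt \<in> Cset \<and> (\<forall>v\<in>Cset. lenC d v \<le> lenC d yt)"
    using yt_C lenC_yt_max lenC_Lw Cset_iff yt_WC by auto
next
  fix w assume w: "w \<in> Cset \<and> (\<forall>v\<in>Cset. lenC d v \<le> lenC d w)"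
  then have wC: "w \<in> Cset" by simp
  have "lenC d yt \<le> lenC d w" using w yt_C by blast
  then have le: "Lw d yt \<le> Lw d w" using lenC_Lw yt_WC wC Cset_iff by simp
  have "card (NIset d yt) = NI0" using good_iff_NI[OF yt_C] yt_good by simp
  then have "card (NIset d w) \<le> NI0" using Lw_Cset[OF wC] Lw_Cset[OF yt_C] le by linarith
  then have "card (NIset d w) = NI0" using NI_ge[OF wC] by simp
  then have "good w" using good_iff_NI[OF wC] by simp
  then show "w = yt" using good_unique[OF wC _ yt_C yt_good] by simp
qed

definition F :: "int \<Rightarrow> int \<Rightarrow> nat" where
  "F i j = (\<Sum>x\<in>{x\<in>Idx r. x < i}. \<Sum>y\<in>{y\<in>Idx r. y < j}. A x y)"
definition G :: "int \<Rightarrow> int \<Rightarrow> nat" where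
  "G i j = (\<Sum>x\<in>{x\<in>Idx r. x > i}. \<Sum>y\<in>{y\<in>Idx r. y > j}. A x y)"

lemma gt_image: "{x\<in>Idx r. x > a} = uminus ` {x\<in>Idx r. x < - a}"
proof (intro equalityI subsetI)
  fix x assume "x \<in> {x\<in>Idx r. x > a}"
  then have "- x \<in> {x\<in>Idx r. x < - a}" "x = - (- x)" using Idx_neg by auto
  then show "x \<in> uminus ` {x\<in>Idx r. x < - a}" by blast
qed (auto simp: Idx_neg)

lemma sum_gt: "(\<Sum>x\<in>{x\<in>Idx r. x > a}. f x) = (\<Sum>x\<in>{x\<in>Idx r. x < - a}. f (- x))"
proof -
  have "inj_on uminus {x\<in>Idx r. x < - a}" by (auto simp: inj_on_def)
  then show ?thesis unfolding gt_image by (simp add: sum.reindex)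
qed

lemma G_F: "G i j = F (- i) (- j)"
proof -
  have "G i j = (\<Sum>x\<in>{x\<in>Idx r. x < - i}. \<Sum>y\<in>{y\<in>Idx r. y > j}. A (- x) y)"
    unfolding G_def by (rule sum_gt)
  also have "\<dots> = (\<Sum>x\<in>{x\<in>Idx r. x < - i}. \<Sum>y\<in>{y\<in>Idx r. y < - j}. A (- x) (- y))"
    by (rule sum.cong[OF refl]) (rule sum_gt)
  also have "\<dots> = F (- i) (- j)" unfolding F_def
  proof (rule sum.cong[OF refl], rule sum.cong[OF refl])
    fix x y assume "x \<in> {x\<in>Idx r. x < - i}" "y \<in> {y\<in>Idx r. y < - j}"
    then show "A (- x) (- y) = A x y" using symA[of x y] by simp
  qed
  finally show ?thesis .
qed

definition Lo :: "int \<times> int \<Rightarrow> (int \<times> int) set" where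
  "Lo c = {x\<in>Idx r. x < fst c} \<times> {y\<in>Idx r. y < snd c}"

lemma NI0_eq: "NI0 = (\<Sum>i\<in>Idx r. \<Sum>j\<in>Idx r. A i j * F i j)"
proof -
  let ?h = "\<lambda>p. A (fst (fst p)) (snd (fst p)) * A (fst (snd p)) (snd (snd p))"
  have P: "Pairs = (\<lambda>q. (snd q, fst q)) ` (Sigma X2 Lo)"
  proof (intro equalityI subsetI)
    fix p assume "p \<in> Pairs"
    then have "(snd p, fst p) \<in> Sigma X2 Lo"
      by (auto simp: Pairs_def Lo_def)
    then show "p \<in> (\<lambda>q. (snd q, fst q)) ` (Sigma X2 Lo)"
      by (intro image_eqI[where x="(snd p, fst p)"]) simp_all
  next
    fix p assume "p \<in> (\<lambda>q. (snd q, fst q)) ` (Sigma X2 Lo)"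
    then show "p \<in> Pairs" by (auto simp: Pairs_def Lo_def)
  qed
  have inj: "inj_on (\<lambda>q. (snd q, fst q)) (Sigma X2 Lo)" by (auto simp: inj_on_def)
  have "NI0 = sum ?h Pairs" by (simp add: NI0_def)
  also have "\<dots> = sum (?h \<circ> (\<lambda>q. (snd q, fst q))) (Sigma X2 Lo)" unfolding P by (rule sum.reindex[OF inj])
  also have "\<dots> = (\<Sum>(c,c')\<in>Sigma X2 Lo. A (fst c') (snd c') * A (fst c) (snd c))"
    by (simp add: case_prod_beta comp_def)
  also have "\<dots> = (\<Sum>c\<in>X2. \<Sum>c'\<in>Lo c. A (fst c') (snd c') * A (fst c) (snd c))"
    by (rule sum.Sigma[symmetric]) (auto simp: Lo_def)
  also have "\<dots> = (\<Sum>c\<in>X2. A (fst c) (snd c) * F (fst c) (snd c))"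
  proof (rule sum.cong[OF refl])
    fix c assume "c \<in> X2"
    have "(\<Sum>c'\<in>Lo c. A (fst c') (snd c') * A (fst c) (snd c)) = (\<Sum>c'\<in>Lo c. A (fst c') (snd c')) * A (fst c) (snd c)"
      by (simp add: sum_distrib_right)
    also have "(\<Sum>c'\<in>Lo c. A (fst c') (snd c')) = F (fst c) (snd c)"
      unfolding Lo_def F_def sum.cartesian_product by (simp add: case_prod_beta)
    finally show "(\<Sum>c'\<in>Lo c. A (fst c') (snd c') * A (fst c) (snd c)) = A (fst c) (snd c) * F (fst c) (snd c)"
      by simp
  qed
  also have "\<dots> = (\<Sum>i\<in>Idx r. \<Sum>j\<in>Idx r. A i j * F i j)"
    unfolding sum.cartesian_product by (simp add: case_prod_beta)
  finally show ?thesis .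
qed

lemma pos_eq: "{1..int r} = {i\<in>Idx r. 0 < i}" by (auto simp: Idx_def)

lemma neg_image: "{i\<in>Idx r. i < 0} = uminus ` {i\<in>Idx r. 0 < i}"
proof (intro equalityI subsetI)
  fix x assume "x \<in> {i\<in>Idx r. i < 0}"
  then have "- x \<in> {i\<in>Idx r. 0 < i}" "x = - (- x)" using Idx_neg by auto
  then show "x \<in> uminus ` {i\<in>Idx r. 0 < i}" by blast
qed (auto simp: Idx_neg)

lemma S1_eq: "(\<Sum>i\<in>{1..int r}. \<Sum>j\<in>Idx r.
              (\<Sum>x\<in>{x\<in>Idx r. x < i}. \<Sum>y\<in>{y\<in>Idx r. y < j}. A i j * A x y)
            + (\<Sum>x\<in>{x\<in>Idx r. x > i}. \<Sum>y\<in>{y\<in>Idx r. y > j}. A i j * A x y)) = NI0"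
proof -
  have inner: "(\<Sum>x\<in>{x\<in>Idx r. x < i}. \<Sum>y\<in>{y\<in>Idx r. y < j}. A i j * A x y)
            + (\<Sum>x\<in>{x\<in>Idx r. x > i}. \<Sum>y\<in>{y\<in>Idx r. y > j}. A i j * A x y)
       = A i j * F i j + A i j * G i j" for i j
    by (simp add: F_def G_def sum_distrib_left)
  have "(\<Sum>i\<in>{1..int r}. \<Sum>j\<in>Idx r.
              (\<Sum>x\<in>{x\<in>Idx r. x < i}. \<Sum>y\<in>{y\<in>Idx r. y < j}. A i j * A x y)
            + (\<Sum>x\<in>{x\<in>Idx r. x > i}. \<Sum>y\<in>{y\<in>Idx r. y > j}. A i j * A x y))
      = (\<Sum>i\<in>{i\<in>Idx r. 0 < i}. \<Sum>j\<in>Idx r. A i j * F i j)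
        + (\<Sum>i\<in>{i\<in>Idx r. 0 < i}. \<Sum>j\<in>Idx r. A i j * G i j)"
    unfolding inner pos_eq by (simp add: sum.distrib)
  also have "(\<Sum>i\<in>{i\<in>Idx r. 0 < i}. \<Sum>j\<in>Idx r. A i j * G i j)
      = (\<Sum>i\<in>{i\<in>Idx r. i < 0}. \<Sum>j\<in>Idx r. A i j * F i j)"
  proof -
    have inj: "inj_on uminus {i\<in>Idx r. 0 < i}" by (auto simp: inj_on_def)
    have "(\<Sum>i\<in>{i\<in>Idx r. i < 0}. \<Sum>j\<in>Idx r. A i j * F i j)
        = (\<Sum>i\<in>{i\<in>Idx r. 0 < i}. \<Sum>j\<in>Idx r. A (- i) j * F (- i) j)"
      unfolding neg_image by (simp add: sum.reindex[OF inj])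
    also have "\<dots> = (\<Sum>i\<in>{i\<in>Idx r. 0 < i}. \<Sum>j\<in>uminus ` Idx r. A (- i) j * F (- i) j)"
      by (simp add: Idx_uminus_image)
    also have "\<dots> = (\<Sum>i\<in>{i\<in>Idx r. 0 < i}. \<Sum>j\<in>Idx r. A (- i) (- j) * F (- i) (- j))"
      by (rule sum.cong[OF refl]) (simp add: sum.reindex inj_on_def)
    also have "\<dots> = (\<Sum>i\<in>{i\<in>Idx r. 0 < i}. \<Sum>j\<in>Idx r. A i j * G i j)"
    proof (rule sum.cong[OF refl], rule sum.cong[OF refl])
      fix i j assume "i \<in> {i\<in>Idx r. 0 < i}" "j \<in> Idx r"
      then show "A (- i) (- j) * F (- i) (- j) = A i j * G i j" using symA[of i j] G_F by simp
    qed
    finally show ?thesis by simp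
  qed
  also have "(\<Sum>i\<in>{i\<in>Idx r. 0 < i}. \<Sum>j\<in>Idx r. A i j * F i j)
        + (\<Sum>i\<in>{i\<in>Idx r. i < 0}. \<Sum>j\<in>Idx r. A i j * F i j)
      = (\<Sum>i\<in>Idx r. \<Sum>j\<in>Idx r. A i j * F i j)"
  proof -
    have un: "Idx r = {i\<in>Idx r. 0 < i} \<union> {i\<in>Idx r. i < 0}" by (auto simp: Idx_def)
    show ?thesis by (subst (3) un, rule sum.union_disjoint[symmetric]) auto
  qed
  finally show ?thesis using NI0_eq by simp
qed

lemma S2_eq: "(\<Sum>i\<in>{i\<in>Idx r. i > 0}. \<Sum>j\<in>{j\<in>Idx r. j > 0}. A i j) + NEG0 = d"
proof -
  have n: "NEG0 = (\<Sum>i\<in>{i\<in>Idx r. i < 0}. \<Sum>j\<in>{j\<in>Idx r. j > 0}. A i j)"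
  proof -
    have "Nq = {i\<in>Idx r. i < 0} \<times> {j\<in>Idx r. j > 0}" by (auto simp: Nq_def)
    then show ?thesis unfolding NEG0_def sum.cartesian_product by (simp add: case_prod_beta)
  qed
  have un: "Idx r = {i\<in>Idx r. 0 < i} \<union> {i\<in>Idx r. i < 0}" by (auto simp: Idx_def)
  have "(\<Sum>i\<in>{i\<in>Idx r. i > 0}. \<Sum>j\<in>{j\<in>Idx r. j > 0}. A i j) + NEG0
      = (\<Sum>i\<in>Idx r. \<Sum>j\<in>{j\<in>Idx r. j > 0}. A i j)"
    unfolding n by (subst (3) un, subst sum.union_disjoint) auto
  also have "\<dots> = (\<Sum>j\<in>{j\<in>Idx r. j > 0}. co r A j)" unfolding co_def by (rule sum.swap)
  also have "\<dots> = d"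
  proof -
    have un2: "Idx r = {j\<in>Idx r. j < 0} \<union> {j\<in>Idx r. 0 < j}" by (auto simp: Idx_def)
    have "sum (co r A) (Idx r) = sum (co r A) {j\<in>Idx r. j < 0} + sum (co r A) {j\<in>Idx r. 0 < j}"
      by (subst un2, rule sum.union_disjoint) auto
    then show ?thesis using M.half co_tot by simp
  qed
  finally show ?thesis .
qed

lemma len_formula:
  "real (lenC d (wplus r d A)) =
        real d ^ 2
        - 1/2 * (\<Sum>i\<in>{1..int r}. \<Sum>j\<in>Idx r.
              (\<Sum>x\<in>{x\<in>Idx r. x < i}. \<Sum>y\<in>{y\<in>Idx r. y < j}. real (A i j * A x y))
            + (\<Sum>x\<in>{x\<in>Idx r. x > i}. \<Sum>y\<in>{y\<in>Idx r. y > j}. real (A i j * A x y)))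
        - 1/2 * (\<Sum>i\<in>{i\<in>Idx r. i > 0}. \<Sum>j\<in>{j\<in>Idx r. j > 0}. real (A i j))"
proof -
  have e1: "(\<Sum>i\<in>{1..int r}. \<Sum>j\<in>Idx r.
              (\<Sum>x\<in>{x\<in>Idx r. x < i}. \<Sum>y\<in>{y\<in>Idx r. y < j}. real (A i j * A x y))
            + (\<Sum>x\<in>{x\<in>Idx r. x > i}. \<Sum>y\<in>{y\<in>Idx r. y > j}. real (A i j * A x y))) = real NI0"
    using arg_cong[OF S1_eq, of real] by (simp add: of_nat_sum)
  have e2: "(\<Sum>i\<in>{i\<in>Idx r. i > 0}. \<Sum>j\<in>{j\<in>Idx r. j > 0}. real (A i j)) = real d - real NEG0"
    using arg_cong[OF S2_eq, of real] by (simp add: of_nat_sum)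
  have L: "2 * Lw d yt + NI0 = d * (2*d - 1) + NEG0"
    using Lw_Cset[OF yt_C] good_iff_NI[OF yt_C] yt_good by simp
  have "real (2 * Lw d yt + NI0) = real (d * (2*d - 1) + NEG0)" using L by simp
  then have L': "2 * real (Lw d yt) + real NI0 = real d * (2 * real d - 1) + real NEG0"
    using d1 by (simp add: of_nat_diff)
  show ?thesis unfolding wplus_eq e1 e2 using lenC_Lw[OF yt_WC] L'
    by (simp add: power2_eq_square algebra_simps)
qed

end

theorem lemma5p5:
  fixes r d :: nat and A :: "int \<Rightarrow> int \<Rightarrow> nat"
  assumes "d \<ge> 1" and "r \<ge> 1" and "A \<in> PiC r d"
  shows "ytilde r d A = wplus r d A
    \<and> real (lenC d (wplus r d A)) =
        real d ^ 2
        - 1/2 * (\<Sum>i\<in>{1..int r}. \<Sum>j\<in>Idx r.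
              (\<Sum>x\<in>{x\<in>Idx r. x < i}. \<Sum>y\<in>{y\<in>Idx r. y < j}. real (A i j * A x y))
            + (\<Sum>x\<in>{x\<in>Idx r. x > i}. \<Sum>y\<in>{y\<in>Idx r. y > j}. real (A i j * A x y)))
        - 1/2 * (\<Sum>i\<in>{i\<in>Idx r. i > 0}. \<Sum>j\<in>{j\<in>Idx r. j > 0}. real (A i j))"
proof -
  interpret mat r d A
    by unfold_locales (use assms in \<open>auto simp: PiC_def\<close>)
  show ?thesis using wplus_eq len_formula by simp
qed


end
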